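(* Let $d\ge3$, $N\ge1$, and let the inverse temperature $\beta>0$ be finite. Let $\mathbf p$ be a probability vector on $d$ levels and let $i_1,i_2,i_3$ be distinct levels that are consecutive neighbours in the $\beta$-order of $\mathbf p$: $\pi_{\mathbf p}(i_3)=\pi_{\mathbf p}(i_2)+1=\pi_{\mathbf p}(i_1)+2$. Let $\Pi=\Pi_{i_1i_3}\Pi_{i_2i_3}$, let $\Pi_{\mathbf p}$ be the permutation matrix of $\pi_{\mathbf p}$, let $\pi'$ be the permutation with matrix $\Pi'=\Pi\,\Pi_{\mathbf p}$, and let $\mathbf p^{\pi'}$ be the corresponding extreme point of $C^{\mathrm{TO}}_+(\mathbf p)$. Using an $N$-dimensional memory with trivial Hamiltonian, let $\widetilde{\mathcal P}^{\Pi}=\mathcal T\circ\widetilde{\mathcal P}^{(i_1i_3)}\circ\widetilde{\mathcal P}^{(i_2i_3)}$. Then $$\widetilde{\mathcal P}^{\Pi}(\mathbf p\otimes\boldsymbol\eta_M)=\mathbf q\otimes\boldsymbol\eta_M\quad\text{with}\quad \delta\big(\mathbf q,\mathbf p^{\pi'}\big)\xrightarrow{N\to\infty}0.$$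
   Context: Setting: a $d$-level system with energies $E_1,\dots,E_d$ and thermal distribution $\gamma_a=e^{-\beta E_a}/\sum_b e^{-\beta E_b}$; an $N$-dimensional memory with trivial Hamiltonian and thermal state $\boldsymbol\eta_M=(1/N,\dots,1/N)$. Joint states are probability vectors $\mathbf Q$ of length $dN$, entry $(a-1)N+k$ corresponding to system level $a$ and memory level $k$; joint thermal distribution $\Gamma_{(a-1)N+k}=\gamma_a/N$. $\Pi_{ij}$ is the permutation matrix transposing $i,j$. Two-level thermalisation $T_{xy}$: $Q_x\mapsto (Q_x+Q_y)\Gamma_x/(\Gamma_x+\Gamma_y)$, $Q_y\mapsto (Q_x+Q_y)\Gamma_y/(\Gamma_x+\Gamma_y)$, other entries unchanged. Round $\mathcal R^{(ij)}_k$ ($k=1,\dots,N$): apply sequentially, for $l=1,\dots,N$, $T_{(j-1)N+k,\,(i-1)N+l}$. $\widetilde{\mathcal P}^{(ij)}=\mathcal R^{(ij)}_N\circ\cdots\circ\mathcal R^{(ij)}_1$. Memory thermalisation $\mathcal T(\mathbf Q)=\mathbf q\otimes\boldsymbol\eta_M$, $q_a=\sum_kQ_{(a-1)N+k}$. $\beta$-order: $\pi_{\mathbf p}$ is the permutation arranging $(p_1/\gamma_1,\dots,p_d/\gamma_d)$ in non-increasing order, $\pi_{\mathbf p}(a)$ being the position of level $a$; $\Pi_{\mathbf p}$ is its matrix, so $\Pi_{\mathbf p}\mathbf p=(p_{\pi_{\mathbf p}^{-1}(1)},\dots,p_{\pi_{\mathbf p}^{-1}(d)})$. Thermomajorisation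 curve $f^\beta_{\mathbf p}$: the piecewise linear curve on $[0,1]$ joining $(0,0)$ and the points $\big(\sum_{l=1}^k\gamma_{\pi_{\mathbf p}^{-1}(l)},\sum_{l=1}^kp_{\pi_{\mathbf p}^{-1}(l)}\big)$, $k=1,\dots,d$. $C^{\mathrm{TO}}_+(\mathbf p)$ is the set of $\mathbf q$ with $f^\beta_{\mathbf p}\ge f^\beta_{\mathbf q}$ on $[0,1]$ (states reachable by thermal operations). For a permutation $\pi$ of $\{1,\dots,d\}$ the point $\mathbf p^{\pi}$ is defined by $x_k=\sum_{l=1}^k\gamma_{\pi^{-1}(l)}$, $y_k=f^\beta_{\mathbf p}(x_k)$, $y_0=0$, and $p^{\pi}_a=y_{\pi(a)}-y_{\pi(a)-1}$; these are the extreme points of $C^{\mathrm{TO}}_+(\mathbf p)$. Total variation distance: $\delta(\mathbf p,\mathbf q)=\frac12\sum_a|p_a-q_a|$. *)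

theory Defs
  imports "HOL-Analysis.Analysis" "HOL-Combinatorics.Transposition"
begin

text \<open>Levels of the system are 1..d; memory levels are 1..N; joint entries are
  indexed linearly by (a-1)*N+k in 1..d*N, as in the paper.  Vectors are functions
  nat => real, only their values on the relevant index range matter.\<close>

definition gibbs :: "nat \<Rightarrow> real \<Rightarrow> (nat \<Rightarrow> real) \<Rightarrow> nat \<Rightarrow> real" where
  "gibbs d \<beta> E a = exp (- \<beta> * E a) / (\<Sum>b=1..d. exp (- \<beta> * E b))"

definition prob_vec :: "nat \<Rightarrow> (nat \<Rightarrow> real) \<Rightarrow> bool" where
  "prob_vec d p \<longleftrightarrow> (\<forall>a\<in>{1..d}. 0 \<le> p a) \<and> (\<Sum>a=1..d. p a) = 1"

definition jidx :: "nat \<Rightarrow> nat \<Rightarrow> nat \<Rightarrow> nat" where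
  "jidx N a k = (a - 1) * N + k"

definition sys_level :: "nat \<Rightarrow> nat \<Rightarrow> nat" where
  "sys_level N x = (x - 1) div N + 1"

definition joint_gibbs :: "nat \<Rightarrow> real \<Rightarrow> (nat \<Rightarrow> real) \<Rightarrow> nat \<Rightarrow> nat \<Rightarrow> real" where
  "joint_gibbs d \<beta> E N x = gibbs d \<beta> E (sys_level N x) / real N"

definition tensor_eta :: "nat \<Rightarrow> nat \<Rightarrow> (nat \<Rightarrow> real) \<Rightarrow> nat \<Rightarrow> real" where
  "tensor_eta d N q x = (if 1 \<le> x \<and> x \<le> d * N then q (sys_level N x) / real N else 0)"

definition therm2 :: "(nat \<Rightarrow> real) \<Rightarrow> nat \<Rightarrow> nat \<Rightarrow> (nat \<Rightarrow> real) \<Rightarrow> nat \<Rightarrow> real" where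
  "therm2 G x y Q = Q(x := (Q x + Q y) * G x / (G x + G y),
                      y := (Q x + Q y) * G y / (G x + G y))"

definition round_op :: "(nat \<Rightarrow> real) \<Rightarrow> nat \<Rightarrow> nat \<Rightarrow> nat \<Rightarrow> nat \<Rightarrow> (nat \<Rightarrow> real) \<Rightarrow> nat \<Rightarrow> real" where
  "round_op G N i j k Q = fold (\<lambda>l. therm2 G (jidx N j k) (jidx N i l)) [1..<N+1] Q"

definition swap_protocol :: "(nat \<Rightarrow> real) \<Rightarrow> nat \<Rightarrow> nat \<Rightarrow> nat \<Rightarrow> (nat \<Rightarrow> real) \<Rightarrow> nat \<Rightarrow> real" where
  "swap_protocol G N i j Q = fold (\<lambda>k. round_op G N i j k) [1..<N+1] Q"

definition marginal :: "nat \<Rightarrow> (nat \<Rightarrow> real) \<Rightarrow> nat \<Rightarrow> real" where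
  "marginal N Q a = (\<Sum>k=1..N. Q (jidx N a k))"

definition mem_therm :: "nat \<Rightarrow> nat \<Rightarrow> (nat \<Rightarrow> real) \<Rightarrow> nat \<Rightarrow> real" where
  "mem_therm d N Q = tensor_eta d N (marginal N Q)"

text \<open>pi is a beta-order of p: a bijection of {1..d} (level |-> position) arranging
  p_a / gamma_a in non-increasing order\<close>
definition beta_order :: "nat \<Rightarrow> (nat \<Rightarrow> real) \<Rightarrow> (nat \<Rightarrow> real) \<Rightarrow> (nat \<Rightarrow> nat) \<Rightarrow> bool" where
  "beta_order d \<gamma> p \<pi> \<longleftrightarrow> bij_betw \<pi> {1..d} {1..d} \<and>
     (\<forall>a\<in>{1..d}. \<forall>b\<in>{1..d}. \<pi> a < \<pi> b \<longrightarrow> p b / \<gamma> b \<le> p a / \<gamma> a)"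

definition cum :: "nat \<Rightarrow> (nat \<Rightarrow> nat) \<Rightarrow> (nat \<Rightarrow> real) \<Rightarrow> nat \<Rightarrow> real" where
  "cum d \<pi> v k = (\<Sum>l=1..k. v (inv_into {1..d} \<pi> l))"

text \<open>thermomajorisation curve f^beta_p: piecewise linear interpolation through (0,0) and
  the points (cum gamma k, cum p k), k = 1..d, built from the beta-order pi of p\<close>
definition thermo_curve :: "nat \<Rightarrow> (nat \<Rightarrow> real) \<Rightarrow> (nat \<Rightarrow> real) \<Rightarrow> (nat \<Rightarrow> nat) \<Rightarrow> real \<Rightarrow> real" where
  "thermo_curve d \<gamma> p \<pi> x =
     (let X = cum d \<pi> \<gamma>; Y = cum d \<pi> p; k = (LEAST k. x \<le> X k) in
      if k = 0 then 0
      else Y (k - 1) + (x - X (k - 1)) * (Y k - Y (k - 1)) / (X k - X (k - 1)))"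

definition extreme_point :: "nat \<Rightarrow> (nat \<Rightarrow> real) \<Rightarrow> (nat \<Rightarrow> real) \<Rightarrow> (nat \<Rightarrow> nat) \<Rightarrow> (nat \<Rightarrow> nat) \<Rightarrow> nat \<Rightarrow> real" where
  "extreme_point d \<gamma> p \<pi> \<sigma> a =
     (let y = (\<lambda>k. thermo_curve d \<gamma> p \<pi> (cum d \<sigma> \<gamma> k)) in y (\<sigma> a) - y (\<sigma> a - 1))"

definition tvd :: "nat \<Rightarrow> (nat \<Rightarrow> real) \<Rightarrow> (nat \<Rightarrow> real) \<Rightarrow> real" where
  "tvd d p q = (\<Sum>a=1..d. \<bar>p a - q a\<bar>) / 2"

end

theory Submission
  imports Defs "HOL-Real_Asymp.Real_Asymp"
begin

definition nonneg :: "(nat \<Rightarrow> real) \<Rightarrow> bool" where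
  "nonneg Q \<longleftrightarrow> (\<forall>z. 0 \<le> Q z)"

definition proto :: "(nat \<Rightarrow> real) \<Rightarrow> nat \<Rightarrow> (nat \<Rightarrow> nat) \<Rightarrow> (nat \<Rightarrow> nat) \<Rightarrow> (nat \<Rightarrow> real) \<Rightarrow> nat \<Rightarrow> real" where
  "proto G N X Y Q = fold (\<lambda>k. fold (\<lambda>l. therm2 G (X k) (Y l)) [1..<N+1]) [1..<N+1] Q"

lemma swap_protocol_proto: "swap_protocol G N i j Q = proto G N (jidx N j) (jidx N i) Q"
proof -
  have "(\<lambda>k. round_op G N i j k) = (\<lambda>k. fold (\<lambda>l. therm2 G (jidx N j k) (jidx N i l)) [1..<N+1])"
    by (rule ext, rule ext) (simp add: round_op_def)
  thus ?thesis unfolding swap_protocol_def proto_def by simp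
qed

lemma fold_pres: "(\<And>a Q. a \<in> set xs \<Longrightarrow> P Q \<Longrightarrow> P (f a Q)) \<Longrightarrow> P Q \<Longrightarrow> P (fold f xs Q)"
  by (induction xs arbitrary: Q) auto

lemma therm2_nonneg: "0 < G x \<Longrightarrow> 0 < G y \<Longrightarrow> nonneg Q \<Longrightarrow> nonneg (therm2 G x y Q)"
  unfolding nonneg_def therm2_def by (auto intro!: divide_nonneg_pos mult_nonneg_nonneg add_nonneg_nonneg)

lemma therm2_other: "z \<noteq> x \<Longrightarrow> z \<noteq> y \<Longrightarrow> therm2 G x y Q z = Q z"
  unfolding therm2_def by simp

lemma proto_nonneg:
  assumes "\<And>k. 0 < G (X k)" "\<And>l. 0 < G (Y l)" "nonneg Q"
  shows "nonneg (proto G N X Y Q)"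
  unfolding proto_def
  by (rule fold_pres[where P=nonneg], rule fold_pres[where P=nonneg])
     (auto intro: therm2_nonneg assms)

lemma proto_other:
  assumes "\<And>k. k \<in> {1..N} \<Longrightarrow> z \<noteq> X k" "\<And>l. l \<in> {1..N} \<Longrightarrow> z \<noteq> Y l"
  shows "proto G N X Y Q z = Q z"
  unfolding proto_def
  by (rule fold_pres[where P="\<lambda>Q'. Q' z = Q z"], rule fold_pres[where P="\<lambda>Q'. Q' z = Q z"])
     (auto simp: therm2_other assms)

definition lin :: "((nat \<Rightarrow> real) \<Rightarrow> (nat \<Rightarrow> real)) \<Rightarrow> bool" where
  "lin \<Phi> \<longleftrightarrow> (\<forall>(I::nat set) \<alpha> F. finite I \<longrightarrow>
      \<Phi> (\<lambda>z. \<Sum>c\<in>I. \<alpha> c * F c z) = (\<lambda>z. \<Sum>c\<in>I. \<alpha> c * \<Phi> (F c) z))"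

lemma therm2_lin: "lin (therm2 G x y)"
  unfolding lin_def
proof (intro allI impI ext)
  fix I :: "nat set" and \<alpha> :: "nat \<Rightarrow> real" and F :: "nat \<Rightarrow> nat \<Rightarrow> real" and z assume "finite I"
  have e: "((\<Sum>c\<in>I. \<alpha> c * F c x) + (\<Sum>c\<in>I. \<alpha> c * F c y)) * t
      = (\<Sum>c\<in>I. \<alpha> c * ((F c x + F c y) * t))" for t
  proof -
    have "(\<Sum>c\<in>I. \<alpha> c * ((F c x + F c y) * t)) = (\<Sum>c\<in>I. \<alpha> c * F c x * t + \<alpha> c * F c y * t)"
      by (rule sum.cong) (auto simp: algebra_simps)
    also have "\<dots> = (\<Sum>c\<in>I. \<alpha> c * F c x) * t + (\<Sum>c\<in>I. \<alpha> c * F c y) * t"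
      by (simp add: sum.distrib sum_distrib_right)
    finally show ?thesis by (simp add: algebra_simps)
  qed
  have t2: "therm2 G x y Q = Q(x := (Q x + Q y) * (G x / (G x + G y)), y := (Q x + Q y) * (G y / (G x + G y)))" for Q
    by (simp add: therm2_def)
  show "therm2 G x y (\<lambda>z. \<Sum>c\<in>I. \<alpha> c * F c z) z = (\<Sum>c\<in>I. \<alpha> c * therm2 G x y (F c) z)"
    unfolding t2
    by (cases "z = y"; cases "z = x") (simp_all add: e sum_divide_distrib)
qed

lemma lin_comp: "lin \<Phi> \<Longrightarrow> lin \<Psi> \<Longrightarrow> lin (\<lambda>Q. \<Psi> (\<Phi> Q))"
  unfolding lin_def by simp

lemma lin_fold: "(\<And>a. a \<in> set xs \<Longrightarrow> lin (f a)) \<Longrightarrow> lin (fold f xs)"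
proof (induction xs)
  case Nil thus ?case by (simp add: lin_def)
next
  case (Cons a xs)
  have "lin (\<lambda>Q. fold f xs (f a Q))" by (rule lin_comp) (use Cons in auto)
  thus ?case by simp
qed

lemma proto_lin: "lin (proto G N X Y)"
proof -
  have "lin (fold (\<lambda>k. fold (\<lambda>l. therm2 G (X k) (Y l)) [1..<N+1]) [1..<N+1])"
    by (intro lin_fold therm2_lin)
  thus ?thesis unfolding proto_def[abs_def] by simp
qed

lemma therm2_pot:
  assumes C: "finite C" "x \<in> C" "y \<in> C" "x \<noteq> y"
    and same: "\<And>z. z \<in> C \<Longrightarrow> z \<noteq> x \<Longrightarrow> z \<noteq> y \<Longrightarrow> W1 z = W0 z"
    and w0: "W0 x = w0" "W0 y = w0"
    and G: "0 < G x" "0 < G y"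
  shows "(\<Sum>z\<in>C. therm2 G x y Q z * W1 z) = (\<Sum>z\<in>C. Q z * W0 z)
           + (Q x + Q y) * ((G x * W1 x + G y * W1 y) / (G x + G y) - w0)"
proof -
  let ?D = "C - {x} - {y}"
  have y1: "y \<in> C - {x}" using C by auto
  have A: "(\<Sum>z\<in>C. f z) = f x + (f y + (\<Sum>z\<in>?D. f z))" for f :: "nat \<Rightarrow> real"
    using sum.remove[OF C(1) C(2), of f] sum.remove[OF _ y1, of f] C(1) by simp
  have B: "(\<Sum>z\<in>?D. therm2 G x y Q z * W1 z) = (\<Sum>z\<in>?D. Q z * W0 z)"
    by (rule sum.cong) (auto simp: therm2_other same)
  have gx: "G x + G y \<noteq> 0" using G by simp
  define T where "T = (G x * W1 x + G y * W1 y) / (G x + G y)"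
  have key: "(Q x + Q y) * G x / (G x + G y) * W1 x + (Q x + Q y) * G y / (G x + G y) * W1 y = (Q x + Q y) * T"
    unfolding T_def add_divide_distrib by (simp add: algebra_simps)
  have th: "therm2 G x y Q x = (Q x + Q y) * G x / (G x + G y)" "therm2 G x y Q y = (Q x + Q y) * G y / (G x + G y)"
    using C(4) by (auto simp: therm2_def)
  have "(\<Sum>z\<in>C. therm2 G x y Q z * W1 z) = (Q x + Q y) * T + (\<Sum>z\<in>?D. Q z * W0 z)"
    unfolding A B th key[symmetric] by simp
  also have "\<dots> = (\<Sum>z\<in>C. Q z * W0 z) + (Q x + Q y) * (T - w0)"
    unfolding A using w0 by (simp add: algebra_simps)
  finally show ?thesis unfolding T_def .
qed

lemma proto_pot:
  fixes W :: "nat \<Rightarrow> nat \<Rightarrow> nat \<Rightarrow> real"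
  assumes step: "\<And>K L Q. K < N \<Longrightarrow> L < N \<Longrightarrow> nonneg Q \<Longrightarrow>
      (\<Sum>z\<in>C. therm2 G (X (Suc K)) (Y (Suc L)) Q z * W K (Suc L) z) \<le> (\<Sum>z\<in>C. Q z * W K L z)"
    and junc: "\<And>K z. K < N \<Longrightarrow> z \<in> C \<Longrightarrow> W K N z = W (Suc K) 0 z"
    and pos: "\<And>k. 0 < G (X k)" "\<And>l. 0 < G (Y l)"
    and Q: "nonneg Q"
  shows "(\<Sum>z\<in>C. proto G N X Y Q z * W N 0 z) \<le> (\<Sum>z\<in>C. Q z * W 0 0 z)"
proof -
  define R where "R K = fold (\<lambda>l. therm2 G (X K) (Y l)) [1..<N+1]" for K
  have Rnn: "nonneg Q' \<Longrightarrow> nonneg (fold (\<lambda>l. therm2 G (X K) (Y l)) xs Q')" for K xs Q'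
    by (rule fold_pres[where P=nonneg]) (auto intro: therm2_nonneg pos)
  have inner: "L \<le> N \<Longrightarrow> nonneg Q' \<Longrightarrow>
     (\<Sum>z\<in>C. fold (\<lambda>l. therm2 G (X (Suc K)) (Y l)) [1..<L+1] Q' z * W K L z) \<le> (\<Sum>z\<in>C. Q' z * W K 0 z)"
    if "K < N" for K L Q'
  proof (induction L)
    case 0 thus ?case by simp
  next
    case (Suc L)
    let ?Q = "fold (\<lambda>l. therm2 G (X (Suc K)) (Y l)) [1..<L+1] Q'"
    have "(\<Sum>z\<in>C. fold (\<lambda>l. therm2 G (X (Suc K)) (Y l)) [1..<Suc L+1] Q' z * W K (Suc L) z)
        = (\<Sum>z\<in>C. therm2 G (X (Suc K)) (Y (Suc L)) ?Q z * W K (Suc L) z)" by simp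
    also have "\<dots> \<le> (\<Sum>z\<in>C. ?Q z * W K L z)"
      by (rule step) (use Suc that Rnn in auto)
    also have "\<dots> \<le> (\<Sum>z\<in>C. Q' z * W K 0 z)" using Suc by simp
    finally show ?case .
  qed
  have outer: "K \<le> N \<Longrightarrow>
     (\<Sum>z\<in>C. fold (\<lambda>k. fold (\<lambda>l. therm2 G (X k) (Y l)) [1..<N+1]) [1..<K+1] Q z * W K 0 z) \<le> (\<Sum>z\<in>C. Q z * W 0 0 z)"
    for K
  proof (induction K)
    case 0 thus ?case by simp
  next
    case (Suc K)
    let ?Q = "fold (\<lambda>k. fold (\<lambda>l. therm2 G (X k) (Y l)) [1..<N+1]) [1..<K+1] Q"
    have nnQ: "nonneg ?Q"
      by (rule fold_pres[where P=nonneg], rule Rnn) (use Q in auto)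
    have "(\<Sum>z\<in>C. fold (\<lambda>k. fold (\<lambda>l. therm2 G (X k) (Y l)) [1..<N+1]) [1..<Suc K+1] Q z * W (Suc K) 0 z)
        = (\<Sum>z\<in>C. fold (\<lambda>l. therm2 G (X (Suc K)) (Y l)) [1..<N+1] ?Q z * W K N z)"
      using Suc.prems by (intro sum.cong) (auto simp: junc)
    also have "\<dots> \<le> (\<Sum>z\<in>C. ?Q z * W K 0 z)"
      by (rule inner) (use Suc.prems nnQ in auto)
    also have "\<dots> \<le> (\<Sum>z\<in>C. Q z * W 0 0 z)" by (rule Suc.IH) (use Suc.prems in simp)
    finally show ?case .
  qed
  show ?thesis using outer[of N] unfolding proto_def by simp
qed

lemma jidx_m1: "1 \<le> a \<Longrightarrow> m \<in> {1..N} \<Longrightarrow> jidx N a m - 1 = (m - 1) + N * (a - 1)"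
  by (simp add: jidx_def algebra_simps)

lemma sys_level_jidx: "1 \<le> a \<Longrightarrow> m \<in> {1..N} \<Longrightarrow> sys_level N (jidx N a m) = a"
proof -
  assume a: "1 \<le> a" and m: "m \<in> {1..N}"
  have N0: "N \<noteq> 0" using m by auto
  have "(jidx N a m - 1) div N = a - 1"
    unfolding jidx_m1[OF a m] div_mult_self2[OF N0] using m by (subst div_less) auto
  thus ?thesis unfolding sys_level_def using a by simp
qed

lemma idx_jidx: "1 \<le> a \<Longrightarrow> m \<in> {1..N} \<Longrightarrow> (jidx N a m - 1) mod N + 1 = m"
proof -
  assume a: "1 \<le> a" and m: "m \<in> {1..N}"
  have "(jidx N a m - 1) mod N = m - 1"
    unfolding jidx_m1[OF a m] mod_mult_self2 using m by (subst mod_less) auto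
  thus ?thesis using m by simp
qed

lemma jidx_inj: "1 \<le> a \<Longrightarrow> m \<in> {1..N} \<Longrightarrow> 1 \<le> a' \<Longrightarrow> m' \<in> {1..N} \<Longrightarrow>
   jidx N a m = jidx N a' m' \<longleftrightarrow> a = a' \<and> m = m'"
  by (metis sys_level_jidx idx_jidx)

locale tset =
  fixes N :: nat and i1 i2 i3 :: nat and \<gamma> :: "nat \<Rightarrow> real" and G :: "nat \<Rightarrow> real"
  assumes N: "1 \<le> N" and dist: "i1 \<noteq> i2" "i2 \<noteq> i3" "i1 \<noteq> i3"
    and lev: "1 \<le> i1" "1 \<le> i2" "1 \<le> i3"
    and gpos: "\<And>a. 0 < \<gamma> a" and g13: "\<gamma> i1 + \<gamma> i3 \<le> 1" and g23: "\<gamma> i2 + \<gamma> i3 \<le> 1"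
    and Gpos: "\<And>z. 0 < G z" and Gval: "\<And>a m. 1 \<le> a \<Longrightarrow> m \<in> {1..N} \<Longrightarrow> G (jidx N a m) = \<gamma> a / N"
begin

definition h :: "nat \<Rightarrow> real" where "h a = \<gamma> a / N"

definition cc :: "nat \<Rightarrow> nat \<Rightarrow> nat \<Rightarrow> nat" where
  "cc K L m = (if m \<le> K then N else if m = Suc K then L else 0)"

definition gX :: "nat \<Rightarrow> real \<Rightarrow> (nat \<Rightarrow> real) \<Rightarrow> nat \<Rightarrow> nat \<Rightarrow> nat \<Rightarrow> nat \<Rightarrow> real" where
  "gX ci x0 xo K L a m = (if a = ci then x0 + real (m - 1) * h ci
      else if a = i3 then x0 + real (cc K L m) * h ci else xo m)"

definition gY :: "nat \<Rightarrow> (nat \<Rightarrow> real) \<Rightarrow> nat \<Rightarrow> nat \<Rightarrow> nat \<Rightarrow> nat \<Rightarrow> real" where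
  "gY ci yo K L a m = (if a = ci then real (K + (if m \<le> L then 1 else 0)) * h i3
      else if a = i3 then real (m - 1) * h i3 else yo m)"

definition lv :: "nat \<Rightarrow> nat" where "lv z = sys_level N z"
definition ix :: "nat \<Rightarrow> nat" where "ix z = (z - 1) mod N + 1"

definition gW :: "(real \<Rightarrow> real \<Rightarrow> real) \<Rightarrow> nat \<Rightarrow> real \<Rightarrow> (nat \<Rightarrow> real) \<Rightarrow> (nat \<Rightarrow> real)
    \<Rightarrow> nat \<Rightarrow> nat \<Rightarrow> nat \<Rightarrow> real" where
  "gW w ci x0 xo yo K L z = w (gX ci x0 xo K L (lv z) (ix z) - gY ci yo K L (lv z) (ix z))
                              (gX ci x0 xo K L (lv z) (ix z) + gY ci yo K L (lv z) (ix z))"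

definition C3 :: "nat set" where
  "C3 = (\<lambda>(a, m). jidx N a m) ` ({i1, i2, i3} \<times> {1..N})"

lemma finC3: "finite C3" unfolding C3_def by simp

lemma C3E:
  assumes "z \<in> C3"
  obtains a m where "a \<in> {i1, i2, i3}" "m \<in> {1..N}" "z = jidx N a m"
proof -
  from assms obtain p where p: "p \<in> {i1, i2, i3} \<times> {1..N}" "z = (\<lambda>(a, m). jidx N a m) p"
    unfolding C3_def by blast
  obtain a m where "p = (a, m)" by (cases p)
  thus ?thesis using p that by auto
qed

lemma lv_ix: "a \<in> {i1, i2, i3} \<Longrightarrow> m \<in> {1..N} \<Longrightarrow> lv (jidx N a m) = a \<and> ix (jidx N a m) = m"
  unfolding lv_def ix_def using sys_level_jidx idx_jidx lev by auto

lemma hpos: "0 < h a" unfolding h_def using gpos N by simp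

lemma gen_step:
  assumes ci: "ci = i1 \<or> ci = i2"
    and wc: "\<And>u s. (h i3 * w (u + h ci) (s + h ci) + h ci * w (u - h i3) (s + h i3)) / (h i3 + h ci) \<le> w u s"
    and KL: "K < N" "L < N" and Q: "nonneg Q"
  shows "(\<Sum>z\<in>C3. therm2 G (jidx N i3 (Suc K)) (jidx N ci (Suc L)) Q z * gW w ci x0 xo yo K (Suc L) z)
         \<le> (\<Sum>z\<in>C3. Q z * gW w ci x0 xo yo K L z)"
proof -
  let ?x = "jidx N i3 (Suc K)" and ?y = "jidx N ci (Suc L)"
  have cii3: "ci \<noteq> i3" "1 \<le> ci" "ci \<in> {i1,i2,i3}" using ci dist lev by auto
  have m1: "Suc K \<in> {1..N}" "Suc L \<in> {1..N}" using KL by auto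
  have xC: "?x \<in> C3" unfolding C3_def using m1 by force
  have yC: "?y \<in> C3" unfolding C3_def using m1 cii3 by force
  have xy: "?x \<noteq> ?y" using jidx_inj[of i3 "Suc K" N ci "Suc L"] m1 cii3 lev by auto
  have lx: "lv ?x = i3" "ix ?x = Suc K" using lv_ix[of i3 "Suc K"] m1 by auto
  have ly: "lv ?y = ci" "ix ?y = Suc L" using lv_ix[of ci "Suc L"] m1 cii3 by auto
  define u where "u = x0 + real L * h ci - real K * h i3"
  define s where "s = x0 + real L * h ci + real K * h i3"
  have same: "gW w ci x0 xo yo K (Suc L) z = gW w ci x0 xo yo K L z"
    if z: "z \<in> C3" "z \<noteq> ?x" "z \<noteq> ?y" for z
  proof -
    obtain a m where am: "a \<in> {i1,i2,i3}" "m \<in> {1..N}" "z = jidx N a m" using z(1) by (rule C3E)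
    have l: "lv z = a" "ix z = m" using lv_ix[OF am(1,2)] am(3) by auto
    have "a \<noteq> i3 \<or> m \<noteq> Suc K" using z(2) am by auto
    moreover have "a \<noteq> ci \<or> m \<noteq> Suc L" using z(3) am by auto
    ultimately show ?thesis unfolding gW_def l gX_def gY_def cc_def by auto
  qed
  have w0x: "gW w ci x0 xo yo K L ?x = w u s"
    unfolding gW_def lx gX_def gY_def cc_def u_def s_def using cii3 by simp
  have w0y: "gW w ci x0 xo yo K L ?y = w u s"
    unfolding gW_def ly gX_def gY_def cc_def u_def s_def using cii3 by simp
  have w1x: "gW w ci x0 xo yo K (Suc L) ?x = w (u + h ci) (s + h ci)"
    unfolding gW_def lx gX_def gY_def cc_def u_def s_def using cii3 by (simp add: algebra_simps)
  have w1y: "gW w ci x0 xo yo K (Suc L) ?y = w (u - h i3) (s + h i3)"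
    unfolding gW_def ly gX_def gY_def cc_def u_def s_def using cii3 by (simp add: algebra_simps)
  have Gx: "G ?x = h i3" "G ?y = h ci" using Gval m1 cii3 lev unfolding h_def by auto
  have eq: "(\<Sum>z\<in>C3. therm2 G ?x ?y Q z * gW w ci x0 xo yo K (Suc L) z)
     = (\<Sum>z\<in>C3. Q z * gW w ci x0 xo yo K L z) + (Q ?x + Q ?y) *
        ((G ?x * gW w ci x0 xo yo K (Suc L) ?x + G ?y * gW w ci x0 xo yo K (Suc L) ?y) / (G ?x + G ?y) - w u s)"
    by (rule therm2_pot[OF finC3 xC yC xy same w0x w0y Gpos Gpos]) auto
  have "(G ?x * gW w ci x0 xo yo K (Suc L) ?x + G ?y * gW w ci x0 xo yo K (Suc L) ?y) / (G ?x + G ?y) - w u s \<le> 0"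
    unfolding Gx w1x w1y using wc[of u s] by simp
  moreover have "0 \<le> Q ?x + Q ?y" using Q unfolding nonneg_def by (simp add: add_nonneg_nonneg)
  ultimately show ?thesis unfolding eq by (simp add: mult_nonneg_nonpos)
qed

lemma gen_junc:
  assumes "K < N" "z \<in> C3"
  shows "gW w ci x0 xo yo K N z = gW w ci x0 xo yo (Suc K) 0 z"
proof -
  obtain a m where am: "a \<in> {i1,i2,i3}" "m \<in> {1..N}" "z = jidx N a m" using assms(2) by (rule C3E)
  have l: "lv z = a" "ix z = m" using lv_ix[OF am(1,2)] am(3) by auto
  show ?thesis unfolding gW_def l gX_def gY_def cc_def using am(2) by auto
qed

lemma gen_proto:
  assumes ci: "ci = i1 \<or> ci = i2"
    and wc: "\<And>u s. (h i3 * w (u + h ci) (s + h ci) + h ci * w (u - h i3) (s + h i3)) / (h i3 + h ci) \<le> w u s"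
    and Q: "nonneg Q"
  shows "(\<Sum>z\<in>C3. proto G N (jidx N i3) (jidx N ci) Q z * gW w ci x0 xo yo N 0 z)
         \<le> (\<Sum>z\<in>C3. Q z * gW w ci x0 xo yo 0 0 z)"
proof (rule proto_pot[where W="gW w ci x0 xo yo" and C=C3])
  fix K L Q' assume "K < N" "L < N" "nonneg Q'"
  thus "(\<Sum>z\<in>C3. therm2 G (jidx N i3 (Suc K)) (jidx N ci (Suc L)) Q' z * gW w ci x0 xo yo K (Suc L) z)
         \<le> (\<Sum>z\<in>C3. Q' z * gW w ci x0 xo yo K L z)"
    by (rule gen_step[OF ci wc])
qed (auto intro: gen_junc Gpos Q)

end


lemma quad_wc:
  fixes a b u s c lam :: real
  assumes "0 < a" "0 < b" "a + b \<le> 2 * lam"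
  shows "(b * ((u + a - c)\<^sup>2 - lam * (s + a)) + a * ((u - b - c)\<^sup>2 - lam * (s + b))) / (b + a)
         \<le> (u - c)\<^sup>2 - lam * s"
proof -
  have e: "b * ((u + a - c)\<^sup>2 - lam * (s + a)) + a * ((u - b - c)\<^sup>2 - lam * (s + b))
      = (b + a) * ((u - c)\<^sup>2 - lam * s) + a * b * (a + b - 2 * lam)"
    by (simp add: power2_eq_square algebra_simps)
  have "a * b * (a + b - 2 * lam) \<le> 0"
    using assms by (simp add: mult_nonneg_nonpos)
  hence "(b + a) * ((u - c)\<^sup>2 - lam * s) + a * b * (a + b - 2 * lam) \<le> (b + a) * ((u - c)\<^sup>2 - lam * s)"
    by simp
  thus ?thesis unfolding e using assms by (simp add: divide_le_eq mult.commute)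
qed

context tset
begin

definition xo1 :: "nat \<Rightarrow> real" where "xo1 m = real N * h i2 + real (m - 1) * h i1"
definition xo2 :: "nat \<Rightarrow> real" where "xo2 m = real (m - 1) * h i2"

definition W1 :: "(real \<Rightarrow> real \<Rightarrow> real) \<Rightarrow> nat \<Rightarrow> nat \<Rightarrow> nat \<Rightarrow> real" where
  "W1 w = gW w i2 0 xo1 (\<lambda>m. 0)"
definition W2 :: "(real \<Rightarrow> real \<Rightarrow> real) \<Rightarrow> nat \<Rightarrow> nat \<Rightarrow> nat \<Rightarrow> real" where
  "W2 w = gW w i1 (real N * h i2) xo2 (\<lambda>m. real N * h i3)"

definition fullP :: "(nat \<Rightarrow> real) \<Rightarrow> nat \<Rightarrow> real" where
  "fullP Q = proto G N (jidx N i3) (jidx N i1) (proto G N (jidx N i3) (jidx N i2) Q)"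

lemma phase_junc: "z \<in> C3 \<Longrightarrow> W2 w 0 0 z = W1 w N 0 z"
proof -
  assume "z \<in> C3"
  then obtain a m where am: "a \<in> {i1,i2,i3}" "m \<in> {1..N}" "z = jidx N a m" by (rule C3E)
  have l: "lv z = a" "ix z = m" using lv_ix[OF am(1,2)] am(3) by auto
  show ?thesis unfolding W1_def W2_def gW_def l gX_def gY_def cc_def xo1_def xo2_def
    using am(1,2) dist by auto
qed

lemma full_pot:
  assumes wc1: "\<And>u s. (h i3 * w (u + h i2) (s + h i2) + h i2 * w (u - h i3) (s + h i3)) / (h i3 + h i2) \<le> w u s"
    and wc2: "\<And>u s. (h i3 * w (u + h i1) (s + h i1) + h i1 * w (u - h i3) (s + h i3)) / (h i3 + h i1) \<le> w u s"
    and Q: "nonneg Q"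
  shows "(\<Sum>z\<in>C3. fullP Q z * W2 w N 0 z) \<le> (\<Sum>z\<in>C3. Q z * W1 w 0 0 z)"
proof -
  let ?Q1 = "proto G N (jidx N i3) (jidx N i2) Q"
  have nn: "nonneg ?Q1" by (rule proto_nonneg) (use Gpos Q in auto)
  have "(\<Sum>z\<in>C3. fullP Q z * W2 w N 0 z) \<le> (\<Sum>z\<in>C3. ?Q1 z * W2 w 0 0 z)"
    unfolding fullP_def W2_def by (rule gen_proto) (use wc2 nn in auto)
  also have "\<dots> = (\<Sum>z\<in>C3. ?Q1 z * W1 w N 0 z)" by (rule sum.cong) (auto simp: phase_junc)
  also have "\<dots> \<le> (\<Sum>z\<in>C3. Q z * W1 w 0 0 z)"
    unfolding W1_def by (rule gen_proto) (use wc1 Q in auto)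
  finally show ?thesis .
qed

definition uT :: "nat \<Rightarrow> real" where
  "uT z = gX i1 (real N * h i2) xo2 N 0 (lv z) (ix z) - gY i1 (\<lambda>m. real N * h i3) N 0 (lv z) (ix z)"
definition sT :: "nat \<Rightarrow> real" where
  "sT z = gX i1 (real N * h i2) xo2 N 0 (lv z) (ix z) + gY i1 (\<lambda>m. real N * h i3) N 0 (lv z) (ix z)"
definition u0 :: "nat \<Rightarrow> real" where
  "u0 z = gX i2 0 xo1 0 0 (lv z) (ix z) - gY i2 (\<lambda>m. 0) 0 0 (lv z) (ix z)"
definition s0 :: "nat \<Rightarrow> real" where
  "s0 z = gX i2 0 xo1 0 0 (lv z) (ix z) + gY i2 (\<lambda>m. 0) 0 0 (lv z) (ix z)"

lemma W2_eq: "W2 w N 0 z = w (uT z) (sT z)" unfolding W2_def gW_def uT_def sT_def by simp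
lemma W1_eq: "W1 w 0 0 z = w (u0 z) (s0 z)" unfolding W1_def gW_def u0_def s0_def by simp

lemma Nh: "real N * h a = \<gamma> a" unfolding h_def using N by simp

lemma uT_i3: "m \<in> {1..N} \<Longrightarrow> uT (jidx N i3 m) = \<gamma> i1 + \<gamma> i2 - real (m - 1) * h i3"
  using lv_ix[of i3 m] dist unfolding uT_def gX_def gY_def cc_def by (simp add: Nh)
lemma uT_i1: "m \<in> {1..N} \<Longrightarrow> uT (jidx N i1 m) = \<gamma> i2 + real (m - 1) * h i1 - \<gamma> i3"
  using lv_ix[of i1 m] dist unfolding uT_def gX_def gY_def cc_def by (simp add: Nh)
lemma uT_i2: "m \<in> {1..N} \<Longrightarrow> uT (jidx N i2 m) = real (m - 1) * h i2 - \<gamma> i3"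
  using lv_ix[of i2 m] dist unfolding uT_def gX_def gY_def cc_def xo2_def by (simp add: Nh)
lemma u0_i3: "m \<in> {1..N} \<Longrightarrow> u0 (jidx N i3 m) = - real (m - 1) * h i3"
  using lv_ix[of i3 m] dist unfolding u0_def gX_def gY_def cc_def by (simp add: algebra_simps)
lemma u0_i1: "m \<in> {1..N} \<Longrightarrow> u0 (jidx N i1 m) = \<gamma> i2 + real (m - 1) * h i1"
  using lv_ix[of i1 m] dist unfolding u0_def gX_def gY_def cc_def xo1_def by (simp add: Nh)
lemma u0_i2: "m \<in> {1..N} \<Longrightarrow> u0 (jidx N i2 m) = real (m - 1) * h i2"
  using lv_ix[of i2 m] dist unfolding u0_def gX_def gY_def cc_def by simp

lemma mh_le: "m \<in> {1..N} \<Longrightarrow> real (m - 1) * h a \<le> \<gamma> a - h a"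
proof -
  assume m: "m \<in> {1..N}"
  have "real (m - 1) \<le> real N - 1" using m by auto
  hence "real (m - 1) * h a \<le> (real N - 1) * h a" by (rule mult_right_mono) (use hpos[of a] in simp)
  thus ?thesis using Nh[of a] by (simp add: algebra_simps)
qed

lemma mh_ge: "0 \<le> real (m - 1) * h a" using hpos[of a] by simp

lemma sT_bound: "z \<in> C3 \<Longrightarrow> sT z \<le> 2"
proof -
  assume "z \<in> C3"
  then obtain a m where am: "a \<in> {i1,i2,i3}" "m \<in> {1..N}" "z = jidx N a m" by (rule C3E)
  have l: "lv z = a" "ix z = m" using lv_ix[OF am(1,2)] am(3) by auto
  have b: "real (m - 1) * h b \<le> \<gamma> b" for b using mh_le[OF am(2), of b] hpos[of b] by simp
  have cc: "cc N 0 m = N" using am(2) unfolding cc_def by simp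
  show ?thesis unfolding sT_def l gX_def gY_def xo2_def cc
    using am(1,2) dist b[of i1] b[of i2] b[of i3] g13 g23 gpos[of i1] gpos[of i2] gpos[of i3]
    by (auto simp: Nh)
qed

lemma s0_nonneg: "z \<in> C3 \<Longrightarrow> 0 \<le> s0 z"
proof -
  assume "z \<in> C3"
  then obtain a m where am: "a \<in> {i1,i2,i3}" "m \<in> {1..N}" "z = jidx N a m" by (rule C3E)
  have l: "lv z = a" "ix z = m" using lv_ix[OF am(1,2)] am(3) by auto
  show ?thesis unfolding s0_def l gX_def gY_def xo1_def cc_def
    using am(1) dist hpos[of i1] hpos[of i2] hpos[of i3] by auto
qed

lemma delta_sum: "finite A \<Longrightarrow> c \<in> A \<Longrightarrow> (\<Sum>z\<in>A. (if z = c then 1 else 0) * f z) = (f c :: real)"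
proof -
  assume "finite A" "c \<in> A"
  have "(\<Sum>z\<in>A. (if z = c then 1 else 0) * f z) = (\<Sum>z\<in>A. if z = c then f z else 0)"
    by (rule sum.cong) auto
  thus ?thesis using \<open>finite A\<close> \<open>c \<in> A\<close> by simp
qed

definition Ker :: "nat \<Rightarrow> nat \<Rightarrow> real" where
  "Ker c = fullP (\<lambda>z. if z = c then 1 else 0)"

lemma Ker_nonneg: "0 \<le> Ker c z"
proof -
  have "nonneg (\<lambda>z. if z = c then 1 else (0::real))" unfolding nonneg_def by auto
  hence "nonneg (proto G N (jidx N i3) (jidx N i2) (\<lambda>z. if z = c then 1 else 0))"
    by (rule proto_nonneg[rotated 2]) (auto intro: Gpos)
  hence "nonneg (Ker c)" unfolding Ker_def fullP_def by (rule proto_nonneg[rotated 2]) (auto intro: Gpos)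
  thus ?thesis unfolding nonneg_def by auto
qed

lemma const_wc: "(h i3 * k + h ci * k) / (h i3 + h ci) \<le> k"
proof -
  have "h i3 + h ci \<noteq> 0" using hpos[of i3] hpos[of ci] by simp
  thus ?thesis by (simp add: distrib_right[symmetric])
qed

lemma Ker_mass: "c \<in> C3 \<Longrightarrow> (\<Sum>z\<in>C3. Ker c z) = 1"
proof -
  assume c: "c \<in> C3"
  have nn: "nonneg (\<lambda>z. if z = c then 1 else (0::real))" unfolding nonneg_def by auto
  have A: "(\<Sum>z\<in>C3. fullP (\<lambda>z. if z = c then 1 else 0) z * W2 (\<lambda>u s. k) N 0 z)
      \<le> (\<Sum>z\<in>C3. (if z = c then 1 else 0) * W1 (\<lambda>u s. k) 0 0 z)" for k
    by (rule full_pot[OF _ _ nn]) (rule const_wc)+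
  have B: "(\<Sum>z\<in>C3. (if z = c then 1 else 0) * W1 (\<lambda>u s. k) 0 0 z) = k" for k :: real
    using delta_sum[OF finC3 c] by (simp add: W1_eq)
  have "(\<Sum>z\<in>C3. Ker c z) * k \<le> k" for k
    using A[of k] B[of k] unfolding W2_eq Ker_def by (simp add: sum_distrib_right)
  from this[of 1] this[of "-1"] show ?thesis by simp
qed

lemma Ker_var: "c \<in> C3 \<Longrightarrow> (\<Sum>z\<in>C3. Ker c z * (uT z - u0 c)\<^sup>2) \<le> 1 / real N"
proof -
  assume c: "c \<in> C3"
  define lam where "lam = 1 / (2 * real N)"
  define w where "w u s = (u - u0 c)\<^sup>2 - lam * s" for u s
  have nn: "nonneg (\<lambda>z. if z = c then 1 else (0::real))" unfolding nonneg_def by auto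
  have hsum: "h i3 + h b \<le> 2 * lam" if "b = i1 \<or> b = i2" for b
  proof -
    have "\<gamma> i3 + \<gamma> b \<le> 1" using that g13 g23 by auto
    hence "(\<gamma> i3 + \<gamma> b) / real N \<le> 1 / real N" using N by (simp add: divide_right_mono)
    thus ?thesis unfolding h_def lam_def by (simp add: add_divide_distrib)
  qed
  have A: "(\<Sum>z\<in>C3. fullP (\<lambda>z. if z = c then 1 else 0) z * W2 w N 0 z)
      \<le> (\<Sum>z\<in>C3. (if z = c then 1 else 0) * W1 w 0 0 z)"
  proof (rule full_pot[OF _ _ nn])
    fix u s
    show "(h i3 * w (u + h i2) (s + h i2) + h i2 * w (u - h i3) (s + h i3)) / (h i3 + h i2) \<le> w u s"
      unfolding w_def by (rule quad_wc) (use hpos hsum[of i2] in auto)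
    show "(h i3 * w (u + h i1) (s + h i1) + h i1 * w (u - h i3) (s + h i3)) / (h i3 + h i1) \<le> w u s"
      unfolding w_def by (rule quad_wc) (use hpos hsum[of i1] in auto)
  qed
  have B: "(\<Sum>z\<in>C3. (if z = c then 1 else 0) * W1 w 0 0 z) = - lam * s0 c"
    using delta_sum[OF finC3 c] by (simp add: W1_eq w_def)
  have C: "(\<Sum>z\<in>C3. Ker c z * (uT z - u0 c)\<^sup>2) - lam * (\<Sum>z\<in>C3. Ker c z * sT z) \<le> - lam * s0 c"
    using A B unfolding W2_eq Ker_def[symmetric] w_def
    by (simp add: sum_subtractf sum_distrib_left algebra_simps)
  have D: "(\<Sum>z\<in>C3. Ker c z * sT z) \<le> (\<Sum>z\<in>C3. Ker c z * 2)"
    by (rule sum_mono) (use Ker_nonneg sT_bound in \<open>auto intro: mult_left_mono\<close>)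
  have E: "(\<Sum>z\<in>C3. Ker c z * 2) = 2" using Ker_mass[OF c] by (simp add: sum_distrib_right[symmetric])
  have lam0: "0 \<le> lam" unfolding lam_def by simp
  have "lam * (\<Sum>z\<in>C3. Ker c z * sT z) \<le> lam * 2" using D E lam0 by (simp add: mult_left_mono)
  moreover have "0 \<le> lam * s0 c" using lam0 s0_nonneg[OF c] by simp
  ultimately show ?thesis using C unfolding lam_def by simp
qed

end


lemma linD: "lin \<Phi> \<Longrightarrow> finite (I :: nat set) \<Longrightarrow> \<Phi> (\<lambda>z. \<Sum>c\<in>I. \<alpha> c * F c z) = (\<lambda>z. \<Sum>c\<in>I. \<alpha> c * \<Phi> (F c) z)"
  unfolding lin_def by simp

lemma lin_add: "lin \<Phi> \<Longrightarrow> \<Phi> (\<lambda>z. A z + B z) = (\<lambda>z. \<Phi> A z + \<Phi> B z)"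
proof -
  assume l: "lin \<Phi>"
  let ?F = "\<lambda>c::nat. if c = 0 then A else B"
  have "\<Phi> (\<lambda>z. \<Sum>c\<in>{0,1}. (\<lambda>_. 1) c * ?F c z) = (\<lambda>z. \<Sum>c\<in>{0,1}. (\<lambda>_. 1) c * \<Phi> (?F c) z)"
    by (rule linD[OF l]) simp
  thus ?thesis by simp
qed

lemma proto_fix:
  assumes "\<And>k. k \<in> {1..N} \<Longrightarrow> R (X k) = 0" "\<And>l. l \<in> {1..N} \<Longrightarrow> R (Y l) = 0"
  shows "proto G N X Y R = R"
  unfolding proto_def
  by (rule fold_pres[where P="\<lambda>Q'. Q' = R"], rule fold_pres[where P="\<lambda>Q'. Q' = R"])
     (auto simp: therm2_def assms)

lemma mix_bounds:
  fixes f Q u :: "nat \<Rightarrow> real"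
  assumes fin: "finite A" and Q: "\<And>c. c \<in> A \<Longrightarrow> 0 \<le> Q c" and Qs: "(\<Sum>c\<in>A. Q c) \<le> 1"
    and f01: "\<And>c. c \<in> A \<Longrightarrow> 0 \<le> f c \<and> f c \<le> 1" and eps: "0 \<le> \<epsilon>"
    and hi: "\<And>c. c \<in> A \<Longrightarrow> t + \<eta> < u c \<Longrightarrow> 1 - \<epsilon> \<le> f c"
    and lo: "\<And>c. c \<in> A \<Longrightarrow> u c \<le> t - \<eta> \<Longrightarrow> f c \<le> \<epsilon>"
  shows "(\<Sum>c\<in>A. if t + \<eta> < u c then Q c else 0) - \<epsilon> \<le> (\<Sum>c\<in>A. Q c * f c)"
    and "(\<Sum>c\<in>A. Q c * f c) \<le> (\<Sum>c\<in>A. if t - \<eta> < u c then Q c else 0) + \<epsilon>"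
proof -
  have m1: "(\<Sum>c\<in>A. if t + \<eta> < u c then Q c else 0) \<le> 1"
    using Qs by (rule order_trans[rotated]) (rule sum_mono, use Q in auto)
  have "(\<Sum>c\<in>A. if t + \<eta> < u c then Q c else 0) - \<epsilon> * (\<Sum>c\<in>A. if t + \<eta> < u c then Q c else 0)
      = (\<Sum>c\<in>A. if t + \<eta> < u c then Q c * (1 - \<epsilon>) else 0)"
    by (simp add: sum_distrib_left sum_subtractf[symmetric] algebra_simps if_distrib)
       (rule sum.cong, auto simp: algebra_simps)
  also have "\<dots> \<le> (\<Sum>c\<in>A. Q c * f c)"
    by (rule sum_mono) (use Q f01 hi in \<open>auto intro: mult_left_mono mult_nonneg_nonneg\<close>)
  finally have "(\<Sum>c\<in>A. if t + \<eta> < u c then Q c else 0) - \<epsilon> * (\<Sum>c\<in>A. if t + \<eta> < u c then Q c else 0)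
      \<le> (\<Sum>c\<in>A. Q c * f c)" .
  moreover have "\<epsilon> * (\<Sum>c\<in>A. if t + \<eta> < u c then Q c else 0) \<le> \<epsilon>"
    using m1 eps by (simp add: mult_left_le)
  ultimately show "(\<Sum>c\<in>A. if t + \<eta> < u c then Q c else 0) - \<epsilon> \<le> (\<Sum>c\<in>A. Q c * f c)" by simp
  have "(\<Sum>c\<in>A. Q c * f c) \<le> (\<Sum>c\<in>A. (if t - \<eta> < u c then Q c else 0) + \<epsilon> * Q c)"
  proof (rule sum_mono)
    fix c assume c: "c \<in> A"
    show "Q c * f c \<le> (if t - \<eta> < u c then Q c else 0) + \<epsilon> * Q c"
    proof (cases "t - \<eta> < u c")
      case True
      have "Q c * f c \<le> Q c" using Q[OF c] f01[OF c] by (simp add: mult_left_le)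
      moreover have "0 \<le> \<epsilon> * Q c" using Q[OF c] eps by simp
      ultimately show ?thesis using True by simp
    next
      case False
      have "Q c * f c \<le> Q c * \<epsilon>" using Q[OF c] lo[OF c] False by (simp add: mult_left_mono)
      thus ?thesis using False by (simp add: mult.commute)
    qed
  qed
  also have "\<dots> = (\<Sum>c\<in>A. if t - \<eta> < u c then Q c else 0) + \<epsilon> * (\<Sum>c\<in>A. Q c)"
    by (simp add: sum.distrib sum_distrib_left)
  also have "\<dots> \<le> (\<Sum>c\<in>A. if t - \<eta> < u c then Q c else 0) + \<epsilon>"
    using Qs eps by (simp add: mult_left_le)
  finally show "(\<Sum>c\<in>A. Q c * f c) \<le> (\<Sum>c\<in>A. if t - \<eta> < u c then Q c else 0) + \<epsilon>" .
qed

context tset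
begin

lemma fullP_lin: "lin fullP"
proof -
  have "lin (\<lambda>Q. proto G N (jidx N i3) (jidx N i1) (proto G N (jidx N i3) (jidx N i2) Q))"
    by (rule lin_comp) (rule proto_lin)+
  thus ?thesis unfolding fullP_def[abs_def] .
qed

lemma jidx_C3: "a \<in> {i1,i2,i3} \<Longrightarrow> m \<in> {1..N} \<Longrightarrow> jidx N a m \<in> C3"
  unfolding C3_def by force

lemma fullP_decomp: "z \<in> C3 \<Longrightarrow> fullP Q z = (\<Sum>c\<in>C3. Q c * Ker c z)"
proof -
  assume z: "z \<in> C3"
  define R where "R z = (if z \<in> C3 then 0 else Q z)" for z
  define A where "A z = (\<Sum>c\<in>C3. Q c * (if z = c then 1 else 0))" for z
  have Az: "A z = (if z \<in> C3 then Q z else 0)" for z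
  proof -
    have "A z = (\<Sum>c\<in>C3. if z = c then Q c else 0)" unfolding A_def by (rule sum.cong) auto
    thus ?thesis using finC3 by simp
  qed
  have QAR: "Q = (\<lambda>z. A z + R z)"
    by (rule ext) (simp add: Az R_def)
  have fA: "fullP A = (\<lambda>z. \<Sum>c\<in>C3. Q c * Ker c z)"
    using fullP_lin finC3 unfolding lin_def A_def Ker_def by auto
  have fR: "fullP R = R"
  proof -
    have "proto G N (jidx N i3) (jidx N i2) R = R"
      by (rule proto_fix) (auto simp: R_def intro: jidx_C3)
    moreover have "proto G N (jidx N i3) (jidx N i1) R = R"
      by (rule proto_fix) (auto simp: R_def intro: jidx_C3)
    ultimately show ?thesis unfolding fullP_def by simp
  qed
  have "fullP Q z = fullP A z + fullP R z" unfolding QAR using lin_add[OF fullP_lin] by simp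
  thus ?thesis using z unfolding fA fR R_def by simp
qed

lemma fullP_other: "z \<notin> C3 \<Longrightarrow> fullP Q z = Q z"
  unfolding fullP_def
  by (subst proto_other, (auto intro: jidx_C3)[2])+ (rule refl)

lemma cheb:
  assumes c: "c \<in> C3" and Z: "Z \<subseteq> C3" and eta: "0 < \<eta>"
    and far: "\<And>z. z \<in> Z \<Longrightarrow> \<eta> \<le> \<bar>uT z - u0 c\<bar>"
  shows "(\<Sum>z\<in>Z. Ker c z) \<le> 1 / (real N * \<eta>\<^sup>2)"
proof -
  have "\<eta>\<^sup>2 * (\<Sum>z\<in>Z. Ker c z) = (\<Sum>z\<in>Z. Ker c z * \<eta>\<^sup>2)" by (simp add: sum_distrib_left mult.commute)
  also have "\<dots> \<le> (\<Sum>z\<in>Z. Ker c z * (uT z - u0 c)\<^sup>2)"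
  proof (rule sum_mono)
    fix z assume z: "z \<in> Z"
    have "\<eta>\<^sup>2 \<le> \<bar>uT z - u0 c\<bar>\<^sup>2" using far[OF z] eta by (intro power_mono) auto
    thus "Ker c z * \<eta>\<^sup>2 \<le> Ker c z * (uT z - u0 c)\<^sup>2" using Ker_nonneg by (simp add: mult_left_mono)
  qed
  also have "\<dots> \<le> (\<Sum>z\<in>C3. Ker c z * (uT z - u0 c)\<^sup>2)"
    by (rule sum_mono2[OF finC3 Z]) (simp add: Ker_nonneg)
  also have "\<dots> \<le> 1 / real N" by (rule Ker_var[OF c])
  finally have "\<eta>\<^sup>2 * (\<Sum>z\<in>Z. Ker c z) \<le> 1 / real N" .
  thus ?thesis using eta N by (simp add: field_simps)
qed

lemma frac_bounds:
  assumes Z: "Z \<subseteq> C3" and c: "c \<in> C3" and eta: "0 < \<eta>"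
    and inZ: "\<And>z. z \<in> Z \<Longrightarrow> t \<le> uT z" and outZ: "\<And>z. z \<in> C3 - Z \<Longrightarrow> uT z < t"
  shows "0 \<le> (\<Sum>z\<in>Z. Ker c z) \<and> (\<Sum>z\<in>Z. Ker c z) \<le> 1"
    and "t + \<eta> < u0 c \<Longrightarrow> 1 - 1 / (real N * \<eta>\<^sup>2) \<le> (\<Sum>z\<in>Z. Ker c z)"
    and "u0 c \<le> t - \<eta> \<Longrightarrow> (\<Sum>z\<in>Z. Ker c z) \<le> 1 / (real N * \<eta>\<^sup>2)"
proof -
  have finZ: "finite Z" using Z finC3 finite_subset by blast
  have split: "(\<Sum>z\<in>C3. Ker c z) = (\<Sum>z\<in>Z. Ker c z) + (\<Sum>z\<in>C3 - Z. Ker c z)"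
    using sum.subset_diff[OF Z finC3] by (simp add: add.commute)
  have nnZ: "0 \<le> (\<Sum>z\<in>C3 - Z. Ker c z)" by (rule sum_nonneg) (simp add: Ker_nonneg)
  show "0 \<le> (\<Sum>z\<in>Z. Ker c z) \<and> (\<Sum>z\<in>Z. Ker c z) \<le> 1"
    using split Ker_mass[OF c] nnZ by (auto intro: sum_nonneg Ker_nonneg)
  show "1 - 1 / (real N * \<eta>\<^sup>2) \<le> (\<Sum>z\<in>Z. Ker c z)" if "t + \<eta> < u0 c"
  proof -
    have "(\<Sum>z\<in>C3 - Z. Ker c z) \<le> 1 / (real N * \<eta>\<^sup>2)"
      by (rule cheb[OF c _ eta]) (use that outZ in \<open>force+\<close>)
    thus ?thesis using split Ker_mass[OF c] by simp
  qed
  show "(\<Sum>z\<in>Z. Ker c z) \<le> 1 / (real N * \<eta>\<^sup>2)" if "u0 c \<le> t - \<eta>"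
    by (rule cheb[OF c Z eta]) (use that inZ in force)
qed

end


definition clp :: "real \<Rightarrow> real \<Rightarrow> real" where "clp L v = max 0 (min L v)"

lemma clp_lip: "\<bar>clp L v - clp L v'\<bar> \<le> \<bar>v - v'\<bar>"
  unfolding clp_def by (auto simp: max_def min_def)

lemma disc_gt:
  fixes hh c0 t :: real
  assumes hh: "0 < hh"
  shows "(\<Sum>m=1..N. if t < c0 + real (m - 1) * hh then hh else 0) \<le> clp (real N * hh) (c0 + real N * hh - t)
       \<and> clp (real N * hh) (c0 + real N * hh - t) \<le> (\<Sum>m=1..N. if t < c0 + real (m - 1) * hh then hh else 0)
            + (if t < c0 + real N * hh then hh else 0)"
proof (induction N)
  case 0 thus ?case using hh by (simp add: clp_def)
next
  case (Suc N)
  let ?S = "\<Sum>m=1..N. if t < c0 + real (m - 1) * hh then hh else 0"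
  have S0: "0 \<le> ?S" by (rule sum_nonneg) (use hh in auto)
  have SS: "(\<Sum>m=1..Suc N. if t < c0 + real (m - 1) * hh then hh else 0)
      = ?S + (if t < c0 + real N * hh then hh else 0)" by simp
  obtain S where S: "S = ?S" by simp
  obtain H where H: "H = real N * hh" by simp
  have H1: "real (Suc N) * hh = H + hh" unfolding H by (simp add: algebra_simps)
  have H0: "0 \<le> H" unfolding H using hh by simp
  have IH: "S \<le> clp H (c0 + H - t) \<and> clp H (c0 + H - t) \<le> S + (if t < c0 + H then hh else 0)"
    using Suc.IH S H by simp
  have "S + (if t < c0 + H then hh else 0) \<le> clp (H + hh) (c0 + (H + hh) - t)
       \<and> clp (H + hh) (c0 + (H + hh) - t) \<le> S + (if t < c0 + H then hh else 0)
            + (if t < c0 + (H + hh) then hh else 0)"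
    using IH hh H0 S0 S unfolding clp_def by (auto simp: max_def min_def split: if_splits)
  thus ?case unfolding SS S[symmetric] H1 H[symmetric] .
qed

lemma disc_lt:
  fixes hh t :: real
  assumes hh: "0 < hh"
  shows "clp (real N * hh) (- t) \<le> (\<Sum>m=1..N. if t < - (real (m - 1) * hh) then hh else 0)
       \<and> (\<Sum>m=1..N. if t < - (real (m - 1) * hh) then hh else 0) \<le> clp (real N * hh) (- t)
            + (if real N * hh < - t then 0 else hh)"
proof (induction N)
  case 0 thus ?case using hh by (simp add: clp_def)
next
  case (Suc N)
  let ?S = "\<Sum>m=1..N. if t < - (real (m - 1) * hh) then hh else 0"
  have SS: "(\<Sum>m=1..Suc N. if t < - (real (m - 1) * hh) then hh else 0)
      = ?S + (if t < - (real N * hh) then hh else 0)" by simp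
  have S0: "0 \<le> ?S" by (rule sum_nonneg) (use hh in auto)
  obtain S where S: "S = ?S" by simp
  obtain H where H: "H = real N * hh" by simp
  have H1: "real (Suc N) * hh = H + hh" unfolding H by (simp add: algebra_simps)
  have H0: "0 \<le> H" unfolding H using hh by simp
  have IH: "clp H (- t) \<le> S \<and> S \<le> clp H (- t) + (if H < - t then 0 else hh)"
    using Suc.IH S H by simp
  have "clp (H + hh) (- t) \<le> S + (if t < - H then hh else 0)
       \<and> S + (if t < - H then hh else 0) \<le> clp (H + hh) (- t)
            + (if H + hh < - t then 0 else hh)"
    using IH hh H0 S0 S unfolding clp_def by (auto simp: max_def min_def split: if_splits)
  thus ?case unfolding SS S[symmetric] H1 H[symmetric] .
qed

lemma disc_gt_abs:
  fixes hh c0 t :: real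
  assumes hh: "0 < hh"
  shows "\<bar>(\<Sum>m=1..N. if t < c0 + real (m - 1) * hh then hh else 0) - clp (real N * hh) (c0 + real N * hh - t)\<bar> \<le> hh"
  using disc_gt[OF hh, of t c0 N] hh by (auto split: if_splits)

lemma disc_lt_abs:
  fixes hh t :: real
  assumes hh: "0 < hh"
  shows "\<bar>(\<Sum>m=1..N. if t < - (real (m - 1) * hh) then hh else 0) - clp (real N * hh) (- t)\<bar> \<le> hh"
  using disc_lt[OF hh, of N t] hh by (auto split: if_splits)


context tset
begin

definition Lset :: "nat \<Rightarrow> nat set" where "Lset a = (\<lambda>m. jidx N a m) ` {1..N}"

lemma Lset_sum: "1 \<le> a \<Longrightarrow> (\<Sum>z\<in>Lset a. g z) = (\<Sum>m=1..N. g (jidx N a m))"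
proof -
  assume a: "1 \<le> a"
  have "inj_on (\<lambda>m. jidx N a m) {1..N}"
    by (rule inj_onI) (use jidx_inj[of a _ N a] a in auto)
  thus ?thesis unfolding Lset_def by (simp add: sum.reindex)
qed

lemma Lset_disj: "1 \<le> a \<Longrightarrow> 1 \<le> b \<Longrightarrow> a \<noteq> b \<Longrightarrow> Lset a \<inter> Lset b = {}"
  unfolding Lset_def using jidx_inj[of a _ N b] by auto

lemma C3_Lset: "C3 = Lset i1 \<union> Lset i2 \<union> Lset i3"
  unfolding C3_def Lset_def by auto

lemma finL: "finite (Lset a)" unfolding Lset_def by simp

lemma sum_C3: "(\<Sum>z\<in>C3. g z) = (\<Sum>m=1..N. g (jidx N i1 m)) + (\<Sum>m=1..N. g (jidx N i2 m)) + (\<Sum>m=1..N. g (jidx N i3 m))"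
proof -
  have d1: "(Lset i1 \<union> Lset i2) \<inter> Lset i3 = {}" using Lset_disj lev dist by auto
  have "(\<Sum>z\<in>C3. g z) = (\<Sum>z\<in>Lset i1 \<union> Lset i2. g z) + (\<Sum>z\<in>Lset i3. g z)"
    unfolding C3_Lset by (rule sum.union_disjoint) (use finL d1 in auto)
  also have "(\<Sum>z\<in>Lset i1 \<union> Lset i2. g z) = (\<Sum>z\<in>Lset i1. g z) + (\<Sum>z\<in>Lset i2. g z)"
    by (rule sum.union_disjoint) (use finL Lset_disj lev dist in auto)
  finally show ?thesis using Lset_sum[OF lev(1), of g] Lset_sum[OF lev(2), of g] Lset_sum[OF lev(3), of g] by simp
qed

lemma Z_bounds:
  assumes Z: "Z \<subseteq> C3" and eta: "0 < \<eta>"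
    and inZ: "\<And>z. z \<in> Z \<Longrightarrow> t \<le> uT z" and outZ: "\<And>z. z \<in> C3 - Z \<Longrightarrow> uT z < t"
    and Q: "\<And>c. c \<in> C3 \<Longrightarrow> 0 \<le> Q c" and Qs: "(\<Sum>c\<in>C3. Q c) \<le> 1"
  shows "(\<Sum>c\<in>C3. if t + \<eta> < u0 c then Q c else 0) - 1 / (real N * \<eta>\<^sup>2) \<le> (\<Sum>z\<in>Z. fullP Q z)"
    and "(\<Sum>z\<in>Z. fullP Q z) \<le> (\<Sum>c\<in>C3. if t - \<eta> < u0 c then Q c else 0) + 1 / (real N * \<eta>\<^sup>2)"
proof -
  have finZ: "finite Z" using Z finC3 finite_subset by blast
  have eq: "(\<Sum>z\<in>Z. fullP Q z) = (\<Sum>c\<in>C3. Q c * (\<Sum>z\<in>Z. Ker c z))"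
  proof -
    have "(\<Sum>z\<in>Z. fullP Q z) = (\<Sum>z\<in>Z. \<Sum>c\<in>C3. Q c * Ker c z)"
      by (rule sum.cong) (use Z fullP_decomp in auto)
    also have "\<dots> = (\<Sum>c\<in>C3. \<Sum>z\<in>Z. Q c * Ker c z)" by (rule sum.swap)
    finally show ?thesis by (simp add: sum_distrib_left)
  qed
  have e0: "0 \<le> 1 / (real N * \<eta>\<^sup>2)" using N by simp
  note fb = frac_bounds[OF Z _ eta inZ outZ]
  show "(\<Sum>c\<in>C3. if t + \<eta> < u0 c then Q c else 0) - 1 / (real N * \<eta>\<^sup>2) \<le> (\<Sum>z\<in>Z. fullP Q z)"
    unfolding eq by (rule mix_bounds(1)[OF finC3 Q Qs _ e0]) (use fb in auto)
  show "(\<Sum>z\<in>Z. fullP Q z) \<le> (\<Sum>c\<in>C3. if t - \<eta> < u0 c then Q c else 0) + 1 / (real N * \<eta>\<^sup>2)"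
    unfolding eq by (rule mix_bounds(2)[OF finC3 Q Qs _ e0]) (use fb in auto)
qed

definition Lam :: "(nat \<Rightarrow> real) \<Rightarrow> real \<Rightarrow> real" where
  "Lam p t = p i1 / \<gamma> i1 * clp (\<gamma> i1) (\<gamma> i2 + \<gamma> i1 - t) + p i2 / \<gamma> i2 * clp (\<gamma> i2) (\<gamma> i2 - t)
           + p i3 / \<gamma> i3 * clp (\<gamma> i3) (- t)"

lemma Lam_lip:
  assumes "0 \<le> p i1" "0 \<le> p i2" "0 \<le> p i3"
  shows "\<bar>Lam p t - Lam p t'\<bar> \<le> (p i1 / \<gamma> i1 + p i2 / \<gamma> i2 + p i3 / \<gamma> i3) * \<bar>t - t'\<bar>"
proof -
  have r: "0 \<le> p a / \<gamma> a" if "0 \<le> p a" for a using that gpos[of a] by simp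
  have l: "\<bar>p a / \<gamma> a * clp L v - p a / \<gamma> a * clp L v'\<bar> \<le> p a / \<gamma> a * \<bar>t - t'\<bar>"
    if "0 \<le> p a" "\<bar>v - v'\<bar> = \<bar>t - t'\<bar>" for a L v v'
  proof -
    have "p a / \<gamma> a * clp L v - p a / \<gamma> a * clp L v' = p a / \<gamma> a * (clp L v - clp L v')"
      by (rule right_diff_distrib[symmetric])
    hence "\<bar>p a / \<gamma> a * clp L v - p a / \<gamma> a * clp L v'\<bar> = p a / \<gamma> a * \<bar>clp L v - clp L v'\<bar>"
      by (simp only: abs_mult abs_of_nonneg[OF r[OF that(1)]])
    also have "\<dots> \<le> p a / \<gamma> a * \<bar>t - t'\<bar>"
      by (rule mult_left_mono[OF _ r[OF that(1)]]) (use clp_lip[of L v v'] that(2) in simp)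
    finally show ?thesis .
  qed
  have a1: "\<bar>(\<gamma> i2 + \<gamma> i1 - t) - (\<gamma> i2 + \<gamma> i1 - t')\<bar> = \<bar>t - t'\<bar>" by linarith
  have a2: "\<bar>(\<gamma> i2 - t) - (\<gamma> i2 - t')\<bar> = \<bar>t - t'\<bar>" by linarith
  have a3: "\<bar>(- t) - (- t')\<bar> = \<bar>t - t'\<bar>" by linarith
  show ?thesis unfolding Lam_def
    using l[OF assms(1) a1, of "\<gamma> i1"] l[OF assms(2) a2, of "\<gamma> i2"] l[OF assms(3) a3, of "\<gamma> i3"]
    by (simp add: algebra_simps) linarith
qed

lemma mu_approx:
  assumes Q0: "\<And>a m. a \<in> {i1,i2,i3} \<Longrightarrow> m \<in> {1..N} \<Longrightarrow> Q0 (jidx N a m) = p a / real N"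
    and p: "0 \<le> p i1" "0 \<le> p i2" "0 \<le> p i3"
  shows "\<bar>(\<Sum>c\<in>C3. if t < u0 c then Q0 c else 0) - Lam p t\<bar> \<le> (p i1 + p i2 + p i3) / real N"
proof -
  have ph: "p a * h a / \<gamma> a = p a / real N" for a
    using gpos[of a] unfolding h_def by simp
  have sc: "(if P then p a / real N else 0) = p a / \<gamma> a * (if P then h a else 0)" for P a
    using ph[of a] by auto
  have A1: "(\<Sum>m=1..N. if t < u0 (jidx N i1 m) then Q0 (jidx N i1 m) else 0)
      = p i1 / \<gamma> i1 * (\<Sum>m=1..N. if t < \<gamma> i2 + real (m - 1) * h i1 then h i1 else 0)"
  proof (subst sum_distrib_left, rule sum.cong[OF refl])
    fix m assume m: "m \<in> {1..N}"
    have "u0 (jidx N i1 m) = \<gamma> i2 + real (m - 1) * h i1" using u0_i1[OF m] by simp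
    thus "(if t < u0 (jidx N i1 m) then Q0 (jidx N i1 m) else 0) = p i1 / \<gamma> i1 * (if t < \<gamma> i2 + real (m - 1) * h i1 then h i1 else 0)"
      using Q0[OF _ m, of i1] sc[of _ i1] ph[of i1] by simp
  qed
  have A2: "(\<Sum>m=1..N. if t < u0 (jidx N i2 m) then Q0 (jidx N i2 m) else 0)
      = p i2 / \<gamma> i2 * (\<Sum>m=1..N. if t < 0 + real (m - 1) * h i2 then h i2 else 0)"
  proof (subst sum_distrib_left, rule sum.cong[OF refl])
    fix m assume m: "m \<in> {1..N}"
    have "u0 (jidx N i2 m) = 0 + real (m - 1) * h i2" using u0_i2[OF m] by simp
    thus "(if t < u0 (jidx N i2 m) then Q0 (jidx N i2 m) else 0) = p i2 / \<gamma> i2 * (if t < 0 + real (m - 1) * h i2 then h i2 else 0)"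
      using Q0[OF _ m, of i2] sc[of _ i2] ph[of i2] by simp
  qed
  have A3: "(\<Sum>m=1..N. if t < u0 (jidx N i3 m) then Q0 (jidx N i3 m) else 0)
      = p i3 / \<gamma> i3 * (\<Sum>m=1..N. if t < - (real (m - 1) * h i3) then h i3 else 0)"
  proof (subst sum_distrib_left, rule sum.cong[OF refl])
    fix m assume m: "m \<in> {1..N}"
    have "u0 (jidx N i3 m) = - (real (m - 1) * h i3)" using u0_i3[OF m] by simp
    thus "(if t < u0 (jidx N i3 m) then Q0 (jidx N i3 m) else 0) = p i3 / \<gamma> i3 * (if t < - (real (m - 1) * h i3) then h i3 else 0)"
      using Q0[OF _ m, of i3] sc[of _ i3] ph[of i3] by simp
  qed
  have B: "\<bar>p a / \<gamma> a * S - p a / \<gamma> a * Cl\<bar> \<le> p a / real N" if "0 \<le> p a" "\<bar>S - Cl\<bar> \<le> h a" for a S Cl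
  proof -
    have r: "0 \<le> p a / \<gamma> a" using that(1) gpos[of a] by simp
    have "p a / \<gamma> a * S - p a / \<gamma> a * Cl = p a / \<gamma> a * (S - Cl)"
      by (rule right_diff_distrib[symmetric])
    hence "\<bar>p a / \<gamma> a * S - p a / \<gamma> a * Cl\<bar> = p a / \<gamma> a * \<bar>S - Cl\<bar>"
      by (simp only: abs_mult abs_of_nonneg[OF r])
    also have "\<dots> \<le> p a / \<gamma> a * h a" by (rule mult_left_mono[OF that(2) r])
    also have "\<dots> = p a / real N" unfolding h_def using gpos[of a] by simp
    finally show ?thesis .
  qed
  have D1: "\<bar>(\<Sum>m=1..N. if t < \<gamma> i2 + real (m - 1) * h i1 then h i1 else 0) - clp (\<gamma> i1) (\<gamma> i2 + \<gamma> i1 - t)\<bar> \<le> h i1"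
    using disc_gt_abs[OF hpos[of i1], of t "\<gamma> i2" N] by (simp add: Nh)
  have D2: "\<bar>(\<Sum>m=1..N. if t < 0 + real (m - 1) * h i2 then h i2 else 0) - clp (\<gamma> i2) (\<gamma> i2 - t)\<bar> \<le> h i2"
    using disc_gt_abs[OF hpos[of i2], of t 0 N] by (simp add: Nh)
  have D3: "\<bar>(\<Sum>m=1..N. if t < - (real (m - 1) * h i3) then h i3 else 0) - clp (\<gamma> i3) (- t)\<bar> \<le> h i3"
    using disc_lt_abs[OF hpos[of i3], of t N] by (simp add: Nh)
  show ?thesis
    unfolding sum_C3[of "\<lambda>c. if t < u0 c then Q0 c else 0"] A1 A2 A3 Lam_def
    using B[OF p(1) D1] B[OF p(2) D2] B[OF p(3) D3]
    by (simp add: add_divide_distrib)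
qed

end


context tset
begin

lemma LsetE: "z \<in> Lset a \<Longrightarrow> (\<And>m. m \<in> {1..N} \<Longrightarrow> z = jidx N a m \<Longrightarrow> P) \<Longrightarrow> P"
  unfolding Lset_def by auto

lemma Lset_C3: "a \<in> {i1,i2,i3} \<Longrightarrow> Lset a \<subseteq> C3" unfolding C3_Lset by auto

lemma Zlam:
  assumes Z: "Z \<subseteq> C3" and eta: "0 < \<eta>"
    and inZ: "\<And>z. z \<in> Z \<Longrightarrow> t \<le> uT z" and outZ: "\<And>z. z \<in> C3 - Z \<Longrightarrow> uT z < t"
    and Q0: "\<And>a m. a \<in> {i1,i2,i3} \<Longrightarrow> m \<in> {1..N} \<Longrightarrow> Q0 (jidx N a m) = p a / real N"
    and p: "0 \<le> p i1" "0 \<le> p i2" "0 \<le> p i3" and ps: "p i1 + p i2 + p i3 \<le> 1"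
  shows "\<bar>(\<Sum>z\<in>Z. fullP Q0 z) - Lam p t\<bar>
          \<le> (p i1 / \<gamma> i1 + p i2 / \<gamma> i2 + p i3 / \<gamma> i3) * \<eta> + 1 / real N + 1 / (real N * \<eta>\<^sup>2)"
proof -
  have Qnn: "0 \<le> Q0 c" if c3: "c \<in> C3" for c
  proof -
    obtain a m where am: "a \<in> {i1,i2,i3}" "m \<in> {1..N}" "c = jidx N a m" using c3 by (rule C3E)
    show ?thesis using Q0[OF am(1,2)] am p by auto
  qed
  have Qsum: "(\<Sum>c\<in>C3. Q0 c) = p i1 + p i2 + p i3"
    unfolding sum_C3 using N by (simp add: Q0)
  hence Qs: "(\<Sum>c\<in>C3. Q0 c) \<le> 1" using ps by simp
  note zb = Z_bounds[OF Z eta inZ outZ Qnn Qs]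
  note mu = mu_approx[OF Q0 p]
  note lip = Lam_lip[OF p]
  let ?R = "p i1 / \<gamma> i1 + p i2 / \<gamma> i2 + p i3 / \<gamma> i3"
  have pN: "(p i1 + p i2 + p i3) / real N \<le> 1 / real N" using ps N by (simp add: divide_right_mono)
  have l1: "\<bar>Lam p (t + \<eta>) - Lam p t\<bar> \<le> ?R * \<eta>" using lip[of "t + \<eta>" t] eta by simp
  have l2: "\<bar>Lam p (t - \<eta>) - Lam p t\<bar> \<le> ?R * \<eta>" using lip[of "t - \<eta>" t] eta by simp
  show ?thesis using zb mu[of "t + \<eta>"] mu[of "t - \<eta>"] l1 l2 pN by linarith
qed

lemma final_bounds:
  assumes eta: "0 < \<eta>"
    and Q0: "\<And>a m. a \<in> {i1,i2,i3} \<Longrightarrow> m \<in> {1..N} \<Longrightarrow> Q0 (jidx N a m) = p a / real N"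
    and p: "0 \<le> p i1" "0 \<le> p i2" "0 \<le> p i3" and ps: "p i1 + p i2 + p i3 \<le> 1"
  shows "\<bar>(\<Sum>z\<in>Lset i3. fullP Q0 z) - Lam p (\<gamma> i1 + \<gamma> i2 - \<gamma> i3)\<bar>
          \<le> (p i1 / \<gamma> i1 + p i2 / \<gamma> i2 + p i3 / \<gamma> i3) * \<eta> + 1 / real N + 1 / (real N * \<eta>\<^sup>2)"
    and "\<bar>(\<Sum>z\<in>Lset i1 \<union> Lset i3. fullP Q0 z) - Lam p (\<gamma> i2 - \<gamma> i3)\<bar>
          \<le> (p i1 / \<gamma> i1 + p i2 / \<gamma> i2 + p i3 / \<gamma> i3) * \<eta> + 1 / real N + 1 / (real N * \<eta>\<^sup>2)"
    and "(\<Sum>z\<in>C3. fullP Q0 z) = p i1 + p i2 + p i3"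
proof -
  have g: "0 < \<gamma> i1" "0 < \<gamma> i2" "0 < \<gamma> i3" "0 < h i1" "0 < h i2" "0 < h i3" using gpos hpos by auto
  have le: "real (m - 1) * h a \<le> \<gamma> a - h a" "0 \<le> real (m - 1) * h a" if "m \<in> {1..N}" for m a
    using mh_le[OF that] mh_ge by auto
  have out3: "z \<in> Lset i1 \<or> z \<in> Lset i2" if "z \<in> C3 - Lset i3" for z
    using that unfolding C3_Lset by auto
  show "\<bar>(\<Sum>z\<in>Lset i3. fullP Q0 z) - Lam p (\<gamma> i1 + \<gamma> i2 - \<gamma> i3)\<bar>
          \<le> (p i1 / \<gamma> i1 + p i2 / \<gamma> i2 + p i3 / \<gamma> i3) * \<eta> + 1 / real N + 1 / (real N * \<eta>\<^sup>2)"
  proof (rule Zlam[OF Lset_C3 eta _ _ Q0 p ps])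
    fix z assume "z \<in> Lset i3"
    then obtain m where m: "m \<in> {1..N}" "z = jidx N i3 m" by (rule LsetE)
    show "\<gamma> i1 + \<gamma> i2 - \<gamma> i3 \<le> uT z" using uT_i3[OF m(1)] le[OF m(1), of i3] g m(2) by simp
  next
    fix z assume z: "z \<in> C3 - Lset i3"
    show "uT z < \<gamma> i1 + \<gamma> i2 - \<gamma> i3"
    proof (cases "z \<in> Lset i1")
      case True
      then obtain m where m: "m \<in> {1..N}" "z = jidx N i1 m" by (rule LsetE)
      show ?thesis using uT_i1[OF m(1)] le[OF m(1), of i1] g m(2) by simp
    next
      case False
      hence "z \<in> Lset i2" using out3[OF z] by simp
      then obtain m where m: "m \<in> {1..N}" "z = jidx N i2 m" by (rule LsetE)
      show ?thesis using uT_i2[OF m(1)] le[OF m(1), of i2] g m(2) by simp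
    qed
  qed simp
  show "\<bar>(\<Sum>z\<in>Lset i1 \<union> Lset i3. fullP Q0 z) - Lam p (\<gamma> i2 - \<gamma> i3)\<bar>
          \<le> (p i1 / \<gamma> i1 + p i2 / \<gamma> i2 + p i3 / \<gamma> i3) * \<eta> + 1 / real N + 1 / (real N * \<eta>\<^sup>2)"
  proof (rule Zlam[OF _ eta _ _ Q0 p ps])
    show "Lset i1 \<union> Lset i3 \<subseteq> C3" unfolding C3_Lset by auto
  next
    fix z assume "z \<in> Lset i1 \<union> Lset i3"
    thus "\<gamma> i2 - \<gamma> i3 \<le> uT z"
    proof
      assume "z \<in> Lset i1"
      then obtain m where m: "m \<in> {1..N}" "z = jidx N i1 m" by (rule LsetE)
      show ?thesis using uT_i1[OF m(1)] le[OF m(1), of i1] g m(2) by simp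
    next
      assume "z \<in> Lset i3"
      then obtain m where m: "m \<in> {1..N}" "z = jidx N i3 m" by (rule LsetE)
      show ?thesis using uT_i3[OF m(1)] le[OF m(1), of i3] g m(2) by simp
    qed
  next
    fix z assume z: "z \<in> C3 - (Lset i1 \<union> Lset i3)"
    hence "z \<in> Lset i2" unfolding C3_Lset by auto
    then obtain m where m: "m \<in> {1..N}" "z = jidx N i2 m" by (rule LsetE)
    show "uT z < \<gamma> i2 - \<gamma> i3" using uT_i2[OF m(1)] le[OF m(1), of i2] g m(2) by simp
  qed
  have "(\<Sum>z\<in>C3. fullP Q0 z) = (\<Sum>z\<in>C3. \<Sum>c\<in>C3. Q0 c * Ker c z)"
    by (rule sum.cong) (auto simp: fullP_decomp)
  also have "\<dots> = (\<Sum>c\<in>C3. Q0 c * (\<Sum>z\<in>C3. Ker c z))"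
    by (subst sum.swap) (simp add: sum_distrib_left)
  also have "\<dots> = (\<Sum>c\<in>C3. Q0 c)" by (rule sum.cong) (auto simp: Ker_mass)
  also have "\<dots> = p i1 + p i2 + p i3" unfolding sum_C3 using N by (simp add: Q0)
  finally show "(\<Sum>z\<in>C3. fullP Q0 z) = p i1 + p i2 + p i3" .
qed

end


lemma cum_0: "cum d \<pi> v 0 = 0" unfolding cum_def by simp

lemma cum_Suc: "cum d \<pi> v (Suc k) = cum d \<pi> v k + v (inv_into {1..d} \<pi> (Suc k))"
  unfolding cum_def by simp

locale curv =
  fixes d :: nat and \<gamma> p :: "nat \<Rightarrow> real" and \<pi> :: "nat \<Rightarrow> nat"
  assumes bij: "bij_betw \<pi> {1..d} {1..d}" and gp: "\<And>a. 0 < \<gamma> a"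
begin

lemma X_mono: "j < k \<Longrightarrow> cum d \<pi> \<gamma> j < cum d \<pi> \<gamma> k"
proof (induction k)
  case 0 thus ?case by simp
next
  case (Suc k)
  have "cum d \<pi> \<gamma> k < cum d \<pi> \<gamma> (Suc k)" using gp by (simp add: cum_Suc)
  thus ?case using Suc by (cases "j = k") auto
qed

lemma X_mono_le: "j \<le> k \<Longrightarrow> cum d \<pi> \<gamma> j \<le> cum d \<pi> \<gamma> k"
  using X_mono by (cases "j = k") (auto simp: less_imp_le)

lemma least_seg:
  assumes "1 \<le> k" "cum d \<pi> \<gamma> (k - 1) < x" "x \<le> cum d \<pi> \<gamma> k"
  shows "(LEAST j. x \<le> cum d \<pi> \<gamma> j) = k"
proof (rule Least_equality)
  show "x \<le> cum d \<pi> \<gamma> k" by fact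
  fix j assume j: "x \<le> cum d \<pi> \<gamma> j"
  show "k \<le> j"
  proof (rule ccontr)
    assume "\<not> k \<le> j"
    hence "j \<le> k - 1" by simp
    hence "cum d \<pi> \<gamma> j \<le> cum d \<pi> \<gamma> (k - 1)" by (rule X_mono_le)
    thus False using assms(2) j by simp
  qed
qed

lemma curve_seg:
  assumes k: "1 \<le> k" and x: "cum d \<pi> \<gamma> (k - 1) < x" "x \<le> cum d \<pi> \<gamma> k"
  shows "thermo_curve d \<gamma> p \<pi> x = cum d \<pi> p (k - 1) + (x - cum d \<pi> \<gamma> (k - 1)) * p (inv_into {1..d} \<pi> k) / \<gamma> (inv_into {1..d} \<pi> k)"
proof -
  obtain j where j: "k = Suc j" using k by (cases k) auto
  have L: "(LEAST j. x \<le> cum d \<pi> \<gamma> j) = k" by (rule least_seg[OF k x])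
  show ?thesis unfolding thermo_curve_def Let_def L using k j gp[of "inv_into {1..d} \<pi> (Suc j)"]
    by (simp add: cum_Suc)
qed

lemma curve_vertex: "thermo_curve d \<gamma> p \<pi> (cum d \<pi> \<gamma> k) = cum d \<pi> p k"
proof (cases k)
  case 0
  have L: "(LEAST j. cum d \<pi> \<gamma> 0 \<le> cum d \<pi> \<gamma> j) = 0" by (rule Least_equality) (auto intro: X_mono_le)
  show ?thesis unfolding thermo_curve_def Let_def 0 L by (simp add: cum_0)
next
  case (Suc j)
  have "thermo_curve d \<gamma> p \<pi> (cum d \<pi> \<gamma> k) = cum d \<pi> p j + (cum d \<pi> \<gamma> k - cum d \<pi> \<gamma> j) * p (inv_into {1..d} \<pi> k) / \<gamma> (inv_into {1..d} \<pi> k)"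
    using curve_seg[of k "cum d \<pi> \<gamma> k"] X_mono[of j k] Suc by simp
  thus ?thesis using Suc gp[of "inv_into {1..d} \<pi> (Suc j)"] by (simp add: cum_Suc)
qed

end

locale three = curv +
  fixes i1 i2 i3 :: nat
  assumes ins: "i1 \<in> {1..d}" "i2 \<in> {1..d}" "i3 \<in> {1..d}"
    and dst: "i1 \<noteq> i2" "i2 \<noteq> i3" "i1 \<noteq> i3"
    and ord: "\<pi> i3 = \<pi> i2 + 1" "\<pi> i2 = \<pi> i1 + 1"
begin

definition \<sigma> :: "nat \<Rightarrow> nat" where
  "\<sigma> = \<pi> \<circ> Transposition.transpose i2 i3 \<circ> Transposition.transpose i1 i3"

definition m0 :: nat where "m0 = \<pi> i1"

lemma inj_pi: "inj_on \<pi> {1..d}" using bij by (rule bij_betw_imp_inj_on)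

lemma pi_in: "a \<in> {1..d} \<Longrightarrow> \<pi> a \<in> {1..d}" using bij bij_betwE by blast

lemma inv_pi: "a \<in> {1..d} \<Longrightarrow> inv_into {1..d} \<pi> (\<pi> a) = a" using inj_pi by simp

lemma pos: "\<pi> i1 = m0" "\<pi> i2 = m0 + 1" "\<pi> i3 = m0 + 2" "1 \<le> m0" "m0 + 2 \<le> d"
  using ord pi_in[OF ins(1)] pi_in[OF ins(3)] unfolding m0_def by auto

lemma tr_in: "b \<in> {1..d} \<Longrightarrow> Transposition.transpose i1 i3 (Transposition.transpose i2 i3 b) \<in> {1..d}"
  using ins unfolding Transposition.transpose_def by auto

lemma inj_sigma: "inj_on \<sigma> {1..d}"
proof (rule inj_onI)
  fix x y assume x: "x \<in> {1..d}" and y: "y \<in> {1..d}" and e: "\<sigma> x = \<sigma> y"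
  have "Transposition.transpose i2 i3 (Transposition.transpose i1 i3 x) \<in> {1..d}"
       "Transposition.transpose i2 i3 (Transposition.transpose i1 i3 y) \<in> {1..d}"
    using x y ins unfolding Transposition.transpose_def by auto
  hence "Transposition.transpose i2 i3 (Transposition.transpose i1 i3 x) = Transposition.transpose i2 i3 (Transposition.transpose i1 i3 y)"
    using e inj_pi unfolding \<sigma>_def by (auto dest: inj_onD)
  thus "x = y" unfolding Transposition.transpose_def by (auto split: if_splits)
qed

lemma inv_sigma:
  assumes l: "l \<in> {1..d}"
  shows "inv_into {1..d} \<sigma> l = Transposition.transpose i1 i3 (Transposition.transpose i2 i3 (inv_into {1..d} \<pi> l))"
proof (rule inv_into_f_eq[OF inj_sigma])
  have lb: "l \<in> \<pi> ` {1..d}" using bij l by (simp add: bij_betw_def)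
  have b: "inv_into {1..d} \<pi> l \<in> {1..d}" by (rule inv_into_into[OF lb])
  show "Transposition.transpose i1 i3 (Transposition.transpose i2 i3 (inv_into {1..d} \<pi> l)) \<in> {1..d}"
    by (rule tr_in[OF b])
  show "\<sigma> (Transposition.transpose i1 i3 (Transposition.transpose i2 i3 (inv_into {1..d} \<pi> l))) = l"
  proof -
    have inv: "Transposition.transpose i2 i3 (Transposition.transpose i1 i3 (Transposition.transpose i1 i3 (Transposition.transpose i2 i3 x))) = x" for x
      by (simp add: Transposition.transpose_def)
    show ?thesis unfolding \<sigma>_def comp_def inv by (rule f_inv_into_f[OF lb])
  qed
qed

lemma inv_pi_pos: "inv_into {1..d} \<pi> m0 = i1" "inv_into {1..d} \<pi> (m0 + 1) = i2" "inv_into {1..d} \<pi> (m0 + 2) = i3"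
  using inv_pi[OF ins(1)] inv_pi[OF ins(2)] inv_pi[OF ins(3)] pos by auto

lemma inv_pi_pos': "inv_into {Suc 0..d} \<pi> m0 = i1" "inv_into {Suc 0..d} \<pi> (m0 + 1) = i2" "inv_into {Suc 0..d} \<pi> (m0 + 2) = i3"
  using inv_pi_pos by simp_all

lemma inv_pi_other: "l \<in> {1..d} \<Longrightarrow> l \<noteq> m0 \<Longrightarrow> l \<noteq> m0 + 1 \<Longrightarrow> l \<noteq> m0 + 2 \<Longrightarrow>
    inv_into {1..d} \<pi> l \<noteq> i1 \<and> inv_into {1..d} \<pi> l \<noteq> i2 \<and> inv_into {1..d} \<pi> l \<noteq> i3"
proof -
  assume l: "l \<in> {1..d}" "l \<noteq> m0" "l \<noteq> m0 + 1" "l \<noteq> m0 + 2"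
  have lb: "l \<in> \<pi> ` {1..d}" using bij l by (simp add: bij_betw_def)
  have "\<pi> (inv_into {1..d} \<pi> l) = l" by (rule f_inv_into_f[OF lb])
  thus ?thesis using l pos by auto
qed

lemma cum_sigma:
  "j \<le> d \<Longrightarrow> cum d \<sigma> \<gamma> j = cum d \<pi> \<gamma> j + (if j = m0 then \<gamma> i3 - \<gamma> i1 else if j = m0 + 1 then \<gamma> i3 - \<gamma> i2 else 0)"
proof (induction j)
  case 0 thus ?case using pos by (simp add: cum_0)
next
  case (Suc j)
  have l: "Suc j \<in> {1..d}" using Suc.prems by simp
  have IH: "cum d \<sigma> \<gamma> j = cum d \<pi> \<gamma> j + (if j = m0 then \<gamma> i3 - \<gamma> i1 else if j = m0 + 1 then \<gamma> i3 - \<gamma> i2 else 0)"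
    using Suc by simp
  have e: "cum d \<sigma> \<gamma> (Suc j) = cum d \<sigma> \<gamma> j + \<gamma> (Transposition.transpose i1 i3 (Transposition.transpose i2 i3 (inv_into {1..d} \<pi> (Suc j))))"
    unfolding cum_Suc by (subst inv_sigma[OF l]) (rule refl)
  have t: "Transposition.transpose i1 i3 (Transposition.transpose i2 i3 i1) = i3"
     "Transposition.transpose i1 i3 (Transposition.transpose i2 i3 i2) = i1"
     "Transposition.transpose i1 i3 (Transposition.transpose i2 i3 i3) = i2"
    using dst by (auto simp: Transposition.transpose_def)
  have t0: "b \<noteq> i1 \<Longrightarrow> b \<noteq> i2 \<Longrightarrow> b \<noteq> i3 \<Longrightarrow> Transposition.transpose i1 i3 (Transposition.transpose i2 i3 b) = b" for b
    by (simp add: Transposition.transpose_def)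
  have cp: "cum d \<pi> \<gamma> (Suc j) = cum d \<pi> \<gamma> j + \<gamma> (inv_into {1..d} \<pi> (Suc j))" by (rule cum_Suc)
  consider "Suc j = m0" | "Suc j = m0 + 1" | "Suc j = m0 + 2" | "Suc j \<noteq> m0 \<and> Suc j \<noteq> m0 + 1 \<and> Suc j \<noteq> m0 + 2" by blast
  thus ?case
  proof cases
    case 1
    have "j \<noteq> m0" "j \<noteq> m0 + 1" using 1 by auto
    moreover have iv: "inv_into {1..d} \<pi> (Suc j) = i1" using inv_pi_pos 1 by simp
    ultimately show ?thesis using IH 1 unfolding e cp iv t by simp
  next
    case 2
    hence "j = m0" by simp
    moreover have iv: "inv_into {1..d} \<pi> (Suc j) = i2" using inv_pi_pos 2 by simp
    ultimately show ?thesis using IH 2 unfolding e cp iv t by simp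
  next
    case 3
    hence "j = m0 + 1" by simp
    moreover have iv: "inv_into {1..d} \<pi> (Suc j) = i3" using inv_pi_pos 3 by simp
    ultimately show ?thesis using IH 3 unfolding e cp iv t by simp
  next
    case 4
    have jj: "j \<noteq> m0" "j \<noteq> m0 + 1" using 4 by auto
    have ne: "inv_into {1..d} \<pi> (Suc j) \<noteq> i1" "inv_into {1..d} \<pi> (Suc j) \<noteq> i2" "inv_into {1..d} \<pi> (Suc j) \<noteq> i3"
      using inv_pi_other[OF l] 4 by auto
    show ?thesis using IH 4 jj unfolding e cp t0[OF ne] by simp
  qed
qed

end


context three
begin

definition Fp :: "real \<Rightarrow> real" where
  "Fp \<tau> = p i1 / \<gamma> i1 * clp (\<gamma> i1) \<tau> + p i2 / \<gamma> i2 * clp (\<gamma> i2) (\<tau> - \<gamma> i1)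
          + p i3 / \<gamma> i3 * clp (\<gamma> i3) (\<tau> - \<gamma> i1 - \<gamma> i2)"

lemma cums: "cum d \<pi> v m0 = cum d \<pi> v (m0 - 1) + v i1"
    "cum d \<pi> v (m0 + 1) = cum d \<pi> v (m0 - 1) + v i1 + v i2"
    "cum d \<pi> v (m0 + 2) = cum d \<pi> v (m0 - 1) + v i1 + v i2 + v i3"
proof -
  have m: "m0 = Suc (m0 - 1)" using pos(4) by simp
  have a: "cum d \<pi> v m0 = cum d \<pi> v (m0 - 1) + v i1"
    using cum_Suc[of d \<pi> v "m0 - 1"] m inv_pi_pos(1) by simp
  have b: "cum d \<pi> v (m0 + 1) = cum d \<pi> v m0 + v i2"
    using cum_Suc[of d \<pi> v m0] inv_pi_pos(2) by simp
  have c: "cum d \<pi> v (m0 + 2) = cum d \<pi> v (m0 + 1) + v i3"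
    using cum_Suc[of d \<pi> v "m0 + 1"] inv_pi_pos(3) by (simp add: numeral_2_eq_2)
  show "cum d \<pi> v m0 = cum d \<pi> v (m0 - 1) + v i1" by (rule a)
  show "cum d \<pi> v (m0 + 1) = cum d \<pi> v (m0 - 1) + v i1 + v i2" using a b by simp
  show "cum d \<pi> v (m0 + 2) = cum d \<pi> v (m0 - 1) + v i1 + v i2 + v i3" using a b c by simp
qed

lemma curve_F:
  assumes t: "0 \<le> \<tau>" "\<tau> \<le> \<gamma> i1 + \<gamma> i2 + \<gamma> i3"
  shows "thermo_curve d \<gamma> p \<pi> (cum d \<pi> \<gamma> (m0 - 1) + \<tau>) = cum d \<pi> p (m0 - 1) + Fp \<tau>"
proof -
  let ?X = "cum d \<pi> \<gamma> (m0 - 1)" and ?Y = "cum d \<pi> p (m0 - 1)"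
  have g: "0 < \<gamma> i1" "0 < \<gamma> i2" "0 < \<gamma> i3" using gp by auto
  have m1: "m0 - 1 = m0 - 1" "1 \<le> m0" "1 \<le> m0 + 1" "1 \<le> m0 + 2" "m0 + 1 - 1 = m0" "m0 + 2 - 1 = m0 + 1"
    using pos(4) by auto
  consider "\<tau> = 0" | "0 < \<tau>" "\<tau> \<le> \<gamma> i1" | "\<gamma> i1 < \<tau>" "\<tau> \<le> \<gamma> i1 + \<gamma> i2"
    | "\<gamma> i1 + \<gamma> i2 < \<tau>" using t by linarith
  thus ?thesis
  proof cases
    case 1
    thus ?thesis using curve_vertex[of "m0 - 1"] g by (simp add: Fp_def clp_def)
  next
    case 2
    have "thermo_curve d \<gamma> p \<pi> (?X + \<tau>) = ?Y + (?X + \<tau> - ?X) * p (inv_into {1..d} \<pi> m0) / \<gamma> (inv_into {1..d} \<pi> m0)"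
      by (rule curve_seg) (use 2 cums(1) m1 in auto)
    thus ?thesis using 2 g inv_pi_pos by (simp add: Fp_def clp_def)
  next
    case 3
    have "thermo_curve d \<gamma> p \<pi> (?X + \<tau>) = cum d \<pi> p m0 + (?X + \<tau> - cum d \<pi> \<gamma> m0) * p (inv_into {1..d} \<pi> (m0 + 1)) / \<gamma> (inv_into {1..d} \<pi> (m0 + 1))"
      using curve_seg[of "m0 + 1" "?X + \<tau>"] 3 cums(1,2)[of \<gamma>] m1 by auto
    thus ?thesis using 3 g inv_pi_pos cums(1)[of p] cums(1)[of \<gamma>] by (simp add: Fp_def clp_def)
  next
    case 4
    have "thermo_curve d \<gamma> p \<pi> (?X + \<tau>) = cum d \<pi> p (m0 + 1) + (?X + \<tau> - cum d \<pi> \<gamma> (m0 + 1)) * p (inv_into {1..d} \<pi> (m0 + 2)) / \<gamma> (inv_into {1..d} \<pi> (m0 + 2))"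
      using curve_seg[of "m0 + 2" "?X + \<tau>"] 4 t cums(2,3)[of \<gamma>] m1 by auto
    thus ?thesis using 4 t g inv_pi_pos cums(2)[of p] cums(2)[of \<gamma>] by (simp add: Fp_def clp_def)
  qed
qed

lemma sig: "\<sigma> i3 = m0" "\<sigma> i1 = m0 + 1" "\<sigma> i2 = m0 + 2"
  "a \<notin> {i1, i2, i3} \<Longrightarrow> \<sigma> a = \<pi> a"
  unfolding \<sigma>_def using pos dst by (auto simp: Transposition.transpose_def)

lemma ext_vals:
  shows "extreme_point d \<gamma> p \<pi> \<sigma> i3 = Fp (\<gamma> i3)"
    and "extreme_point d \<gamma> p \<pi> \<sigma> i1 = Fp (\<gamma> i1 + \<gamma> i3) - Fp (\<gamma> i3)"
    and "extreme_point d \<gamma> p \<pi> \<sigma> i2 = p i1 + p i2 + p i3 - Fp (\<gamma> i1 + \<gamma> i3)"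
    and "a \<in> {1..d} \<Longrightarrow> a \<notin> {i1, i2, i3} \<Longrightarrow> extreme_point d \<gamma> p \<pi> \<sigma> a = p a"
proof -
  have g: "0 < \<gamma> i1" "0 < \<gamma> i2" "0 < \<gamma> i3" using gp by auto
  have md: "m0 \<le> d" "m0 + 1 \<le> d" "m0 + 2 \<le> d" "m0 - 1 \<le> d" using pos by auto
  have mm: "m0 - 1 \<noteq> m0" "m0 - 1 \<noteq> m0 + 1" using pos(4) by auto
  have cs0: "cum d \<sigma> \<gamma> (m0 - 1) = cum d \<pi> \<gamma> (m0 - 1)" using cum_sigma[OF md(4)] by (simp only: mm if_False add_0_right)
  have cs1: "cum d \<sigma> \<gamma> m0 = cum d \<pi> \<gamma> (m0 - 1) + \<gamma> i3" using cum_sigma[OF md(1)] cums(1)[of \<gamma>] by simp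
  have cs2: "cum d \<sigma> \<gamma> (m0 + 1) = cum d \<pi> \<gamma> (m0 - 1) + (\<gamma> i1 + \<gamma> i3)"
    using cum_sigma[OF md(2)] cums(2)[of \<gamma>] by simp
  have cs3: "cum d \<sigma> \<gamma> (m0 + 2) = cum d \<pi> \<gamma> (m0 + 2)" using cum_sigma[OF md(3)] by simp
  have F0: "Fp 0 = 0" using g unfolding Fp_def clp_def by simp
  have c0: "thermo_curve d \<gamma> p \<pi> (cum d \<pi> \<gamma> (m0 - 1)) = cum d \<pi> p (m0 - 1)" by (rule curve_vertex)
  have c1: "thermo_curve d \<gamma> p \<pi> (cum d \<pi> \<gamma> (m0 - 1) + \<gamma> i3) = cum d \<pi> p (m0 - 1) + Fp (\<gamma> i3)"
    by (rule curve_F) (use g in auto)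
  have c2: "thermo_curve d \<gamma> p \<pi> (cum d \<pi> \<gamma> (m0 - 1) + (\<gamma> i1 + \<gamma> i3)) = cum d \<pi> p (m0 - 1) + Fp (\<gamma> i1 + \<gamma> i3)"
    by (rule curve_F) (use g in auto)
  have c3: "thermo_curve d \<gamma> p \<pi> (cum d \<pi> \<gamma> (m0 + 2)) = cum d \<pi> p (m0 - 1) + p i1 + p i2 + p i3"
    using curve_vertex[of "m0 + 2"] cums(3)[of p] by simp
  show "extreme_point d \<gamma> p \<pi> \<sigma> i3 = Fp (\<gamma> i3)"
    unfolding extreme_point_def Let_def sig(1) using cs0 cs1 c0 c1 by simp
  show "extreme_point d \<gamma> p \<pi> \<sigma> i1 = Fp (\<gamma> i1 + \<gamma> i3) - Fp (\<gamma> i3)"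
    unfolding extreme_point_def Let_def sig(2) using cs1 cs2 c1 c2 by simp
  show "extreme_point d \<gamma> p \<pi> \<sigma> i2 = p i1 + p i2 + p i3 - Fp (\<gamma> i1 + \<gamma> i3)"
  proof -
    have "m0 + 2 - 1 = m0 + 1" by simp
    thus ?thesis unfolding extreme_point_def Let_def sig(3) using cs2 cs3 c2 c3 by simp
  qed
  assume a: "a \<in> {1..d}" "a \<notin> {i1, i2, i3}"
  let ?k = "\<pi> a"
  have k: "?k \<in> {1..d}" using pi_in[OF a(1)] .
  have kn: "?k \<noteq> m0" "?k \<noteq> m0 + 1" "?k \<noteq> m0 + 2"
    using a inj_pi pos ins unfolding inj_on_def by (metis insertCI)+
  have e1: "cum d \<sigma> \<gamma> ?k = cum d \<pi> \<gamma> ?k" using cum_sigma[of ?k] k kn by simp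
  have e2: "cum d \<sigma> \<gamma> (?k - 1) = cum d \<pi> \<gamma> (?k - 1)" using cum_sigma[of "?k - 1"] k kn by auto
  have kk: "?k = Suc (?k - 1)" using k by simp
  have "cum d \<pi> p ?k - cum d \<pi> p (?k - 1) = p (inv_into {1..d} \<pi> ?k)"
    using cum_Suc[of d \<pi> p "?k - 1"] kk by simp
  also have "\<dots> = p a" using inv_pi[OF a(1)] by simp
  finally show "extreme_point d \<gamma> p \<pi> \<sigma> a = p a"
    unfolding extreme_point_def Let_def sig(4)[OF a(2)] e1 e2 curve_vertex .
qed

end


lemma gibbs_pos: "1 \<le> d \<Longrightarrow> 0 < gibbs d \<beta> E a"
proof -
  assume d: "1 \<le> d"
  have "0 < (\<Sum>b=1..d. exp (- \<beta> * E b))" by (rule sum_pos) (use d in auto)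
  thus ?thesis unfolding gibbs_def by simp
qed

lemma gibbs_sum: "1 \<le> d \<Longrightarrow> (\<Sum>a=1..d. gibbs d \<beta> E a) = 1"
proof -
  assume d: "1 \<le> d"
  have "0 < (\<Sum>b=1..d. exp (- \<beta> * E b))" by (rule sum_pos) (use d in auto)
  thus ?thesis unfolding gibbs_def by (simp add: sum_divide_distrib[symmetric])
qed

lemma sub_sum_le:
  fixes f :: "nat \<Rightarrow> real"
  assumes "S \<subseteq> {1..d}" "\<And>a. a \<in> {1..d} \<Longrightarrow> 0 \<le> f a" "(\<Sum>a=1..d. f a) = 1"
  shows "(\<Sum>a\<in>S. f a) \<le> 1"
  using sum_mono2[of "{1..d}" S f] assms by auto

lemma te_jidx:
  assumes "a \<in> {1..d}" "m \<in> {1..N}"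
  shows "tensor_eta d N q (jidx N a m) = q a / real N"
proof -
  have "jidx N a m \<le> d * N"
  proof -
    have "(a - 1) * N + m \<le> (d - 1) * N + N" using assms by (intro add_mono mult_right_mono) auto
    also have "\<dots> = d * N" using assms by (cases d) auto
    finally show ?thesis unfolding jidx_def .
  qed
  moreover have "1 \<le> jidx N a m" using assms unfolding jidx_def by auto
  ultimately show ?thesis unfolding tensor_eta_def using sys_level_jidx[of a m N] assms by auto
qed

lemma marg_te: "a \<in> {1..d} \<Longrightarrow> 1 \<le> N \<Longrightarrow> marginal N (tensor_eta d N q) a = q a"
  unfolding marginal_def by (simp add: te_jidx)

lemma te_idem: "1 \<le> N \<Longrightarrow> tensor_eta d N (marginal N (tensor_eta d N q)) = tensor_eta d N q"
proof (rule ext)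
  fix x assume N: "1 \<le> N"
  show "tensor_eta d N (marginal N (tensor_eta d N q)) x = tensor_eta d N q x"
  proof (cases "1 \<le> x \<and> x \<le> d * N")
    case True
    have "x - 1 < d * N" using True by auto
    hence "(x - 1) div N < d" by (rule less_mult_imp_div_less)
    hence "sys_level N x \<in> {1..d}" unfolding sys_level_def by auto
    thus ?thesis using True N marg_te unfolding tensor_eta_def by simp
  next
    case False
    have "tensor_eta d N Q' x = 0" for Q' using False unfolding tensor_eta_def by auto
    thus ?thesis by simp
  qed
qed

definition etaN :: "nat \<Rightarrow> real" where "etaN N = 1 / sqrt (sqrt (real N))"
definition BN :: "real \<Rightarrow> nat \<Rightarrow> real" where
  "BN R N = R * etaN N + 1 / real N + 1 / (real N * (etaN N)\<^sup>2)"

lemma BN_lim: "BN R \<longlonglongrightarrow> 0"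
proof -
  have a: "(\<lambda>N. etaN N) \<longlonglongrightarrow> 0" unfolding etaN_def by real_asymp
  have b: "(\<lambda>N. 1 / real N) \<longlonglongrightarrow> 0" by real_asymp
  have c: "(\<lambda>N. 1 / (real N * (etaN N)\<^sup>2)) \<longlonglongrightarrow> 0" unfolding etaN_def by real_asymp
  have "(\<lambda>N. R * etaN N + 1 / real N + 1 / (real N * (etaN N)\<^sup>2)) \<longlonglongrightarrow> R * 0 + 0 + 0"
    by (intro tendsto_intros a b c)
  thus ?thesis unfolding BN_def[abs_def] by simp
qed


lemma main_N:
  fixes d :: nat and \<beta> :: real and E p :: "nat \<Rightarrow> real" and \<pi> :: "nat \<Rightarrow> nat"
    and i1 i2 i3 N :: nat
  assumes d: "d \<ge> 3" and pv: "prob_vec d p" and bo: "beta_order d (gibbs d \<beta> E) p \<pi>"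
    and ins: "i1 \<in> {1..d}" "i2 \<in> {1..d}" "i3 \<in> {1..d}"
    and dst: "i1 \<noteq> i2" "i2 \<noteq> i3" "i1 \<noteq> i3"
    and ord: "\<pi> i3 = \<pi> i2 + 1" "\<pi> i2 = \<pi> i1 + 1"
    and N: "1 \<le> N"
  shows "mem_therm d N (swap_protocol (joint_gibbs d \<beta> E N) N i1 i3 (swap_protocol (joint_gibbs d \<beta> E N) N i2 i3 (tensor_eta d N p)))
         = tensor_eta d N (marginal N (mem_therm d N (swap_protocol (joint_gibbs d \<beta> E N) N i1 i3 (swap_protocol (joint_gibbs d \<beta> E N) N i2 i3 (tensor_eta d N p)))))"
    and "tvd d (marginal N (mem_therm d N (swap_protocol (joint_gibbs d \<beta> E N) N i1 i3 (swap_protocol (joint_gibbs d \<beta> E N) N i2 i3 (tensor_eta d N p)))))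
           (extreme_point d (gibbs d \<beta> E) p \<pi> (\<pi> \<circ> Transposition.transpose i2 i3 \<circ> Transposition.transpose i1 i3))
         \<le> 2 * BN (p i1 / gibbs d \<beta> E i1 + p i2 / gibbs d \<beta> E i2 + p i3 / gibbs d \<beta> E i3) N"
proof -
  define \<gamma> where "\<gamma> = gibbs d \<beta> E"
  define G where "G = joint_gibbs d \<beta> E N"
  define Q0 where "Q0 = tensor_eta d N p"
  have d1: "1 \<le> d" using d by simp
  have gp: "0 < \<gamma> a" for a unfolding \<gamma>_def by (rule gibbs_pos[OF d1])
  have gs: "(\<Sum>a=1..d. \<gamma> a) = 1" unfolding \<gamma>_def by (rule gibbs_sum[OF d1])
  have g13: "\<gamma> i1 + \<gamma> i3 \<le> 1" using sub_sum_le[of "{i1, i3}" d \<gamma>] ins dst gs gp by (simp add: less_imp_le)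
  have g23: "\<gamma> i2 + \<gamma> i3 \<le> 1" using sub_sum_le[of "{i2, i3}" d \<gamma>] ins dst gs gp by (simp add: less_imp_le)
  have p0: "0 \<le> p a" if "a \<in> {1..d}" for a using pv that unfolding prob_vec_def by auto
  have ps: "(\<Sum>a=1..d. p a) = 1" using pv unfolding prob_vec_def by auto
  have p123: "p i1 + p i2 + p i3 \<le> 1" using sub_sum_le[of "{i1, i2, i3}" d p] ins dst ps p0 by simp
  have Gpos: "0 < G z" for z unfolding G_def joint_gibbs_def using gp N by (simp add: \<gamma>_def)
  have Gval: "G (jidx N a m) = \<gamma> a / real N" if "1 \<le> a" "m \<in> {1..N}" for a m
    unfolding G_def joint_gibbs_def \<gamma>_def using sys_level_jidx[OF that] by simp
  have lev: "1 \<le> i1" "1 \<le> i2" "1 \<le> i3" using ins by auto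
  interpret T: tset N i1 i2 i3 \<gamma> G
    by unfold_locales (use N dst lev gp g13 g23 Gpos Gval in auto)
  have bij: "bij_betw \<pi> {1..d} {1..d}" using bo unfolding beta_order_def \<gamma>_def by auto
  interpret C: three d \<gamma> p \<pi> i1 i2 i3
    by unfold_locales (use bij gp ins dst ord in auto)
  have Q0v: "Q0 (jidx N a m) = p a / real N" if "a \<in> {i1, i2, i3}" "m \<in> {1..N}" for a m
    unfolding Q0_def by (rule te_jidx) (use that ins in auto)
  define P where "P = T.fullP Q0"
  have Peq: "swap_protocol G N i1 i3 (swap_protocol G N i2 i3 Q0) = P"
    unfolding P_def T.fullP_def swap_protocol_proto ..
  define out where "out = mem_therm d N P"
  have out_eq: "out = tensor_eta d N (marginal N P)" unfolding out_def mem_therm_def ..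
  show "mem_therm d N (swap_protocol (joint_gibbs d \<beta> E N) N i1 i3 (swap_protocol (joint_gibbs d \<beta> E N) N i2 i3 (tensor_eta d N p)))
         = tensor_eta d N (marginal N (mem_therm d N (swap_protocol (joint_gibbs d \<beta> E N) N i1 i3 (swap_protocol (joint_gibbs d \<beta> E N) N i2 i3 (tensor_eta d N p)))))"
    unfolding G_def[symmetric] Q0_def[symmetric] Peq out_def[symmetric] out_eq te_idem[OF N] ..
  have mo: "marginal N out a = marginal N P a" if "a \<in> {1..d}" for a
    unfolding out_eq by (rule marg_te[OF that N])
  have mL: "marginal N P a = (\<Sum>z\<in>T.Lset a. P z)" if "1 \<le> a" for a
    unfolding marginal_def by (subst T.Lset_sum[OF that]) (rule refl)
  have other: "marginal N P a = p a" if a: "a \<in> {1..d}" "a \<notin> {i1, i2, i3}" for a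
  proof -
    have "P (jidx N a k) = p a / real N" if k: "k \<in> {1..N}" for k
    proof -
      have "jidx N a k \<notin> T.C3"
      proof
        assume "jidx N a k \<in> T.C3"
        then obtain a' m' where am: "a' \<in> {i1, i2, i3}" "m' \<in> {1..N}" "jidx N a k = jidx N a' m'" by (rule T.C3E)
        have "a = a'" using jidx_inj[of a k N a' m'] am a k lev by auto
        thus False using am a by auto
      qed
      hence "P (jidx N a k) = Q0 (jidx N a k)" unfolding P_def by (rule T.fullP_other)
      thus ?thesis unfolding Q0_def using te_jidx[OF a(1) k] by simp
    qed
    hence "marginal N P a = (\<Sum>k=1..N. p a / real N)" unfolding marginal_def by simp
    thus ?thesis using N by simp
  qed
  define \<eta> where "\<eta> = etaN N"
  have eta: "0 < \<eta>" unfolding \<eta>_def etaN_def using N by simp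
  note fb = T.final_bounds[OF eta Q0v p0 p0 p0 p123, unfolded P_def[symmetric]]
  have fb1: "\<bar>marginal N P i3 - T.Lam p (\<gamma> i1 + \<gamma> i2 - \<gamma> i3)\<bar> \<le> BN (p i1 / \<gamma> i1 + p i2 / \<gamma> i2 + p i3 / \<gamma> i3) N"
    using fb(1) ins unfolding mL[OF lev(3)] BN_def \<eta>_def by simp
  have q13: "(\<Sum>z\<in>T.Lset i1 \<union> T.Lset i3. P z) = marginal N P i1 + marginal N P i3"
    unfolding mL[OF lev(1)] mL[OF lev(3)] by (rule sum.union_disjoint) (use T.finL T.Lset_disj lev dst in auto)
  have fb2: "\<bar>marginal N P i1 + marginal N P i3 - T.Lam p (\<gamma> i2 - \<gamma> i3)\<bar> \<le> BN (p i1 / \<gamma> i1 + p i2 / \<gamma> i2 + p i3 / \<gamma> i3) N"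
    using fb(2) ins unfolding q13 BN_def \<eta>_def by simp
  have fb3: "marginal N P i1 + marginal N P i2 + marginal N P i3 = p i1 + p i2 + p i3"
    using fb(3) ins unfolding T.sum_C3 marginal_def by simp
  have L1: "T.Lam p (\<gamma> i1 + \<gamma> i2 - \<gamma> i3) = C.Fp (\<gamma> i3)"
  proof -
    have "\<gamma> i2 + \<gamma> i1 - (\<gamma> i1 + \<gamma> i2 - \<gamma> i3) = \<gamma> i3" "\<gamma> i2 - (\<gamma> i1 + \<gamma> i2 - \<gamma> i3) = \<gamma> i3 - \<gamma> i1"
         "- (\<gamma> i1 + \<gamma> i2 - \<gamma> i3) = \<gamma> i3 - \<gamma> i1 - \<gamma> i2" by simp_all
    thus ?thesis unfolding T.Lam_def C.Fp_def by (simp only:)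
  qed
  have L2: "T.Lam p (\<gamma> i2 - \<gamma> i3) = C.Fp (\<gamma> i1 + \<gamma> i3)"
  proof -
    have "\<gamma> i2 + \<gamma> i1 - (\<gamma> i2 - \<gamma> i3) = \<gamma> i1 + \<gamma> i3" "\<gamma> i2 - (\<gamma> i2 - \<gamma> i3) = \<gamma> i1 + \<gamma> i3 - \<gamma> i1"
         "- (\<gamma> i2 - \<gamma> i3) = \<gamma> i1 + \<gamma> i3 - \<gamma> i1 - \<gamma> i2" by simp_all
    thus ?thesis unfolding T.Lam_def C.Fp_def by (simp only:)
  qed
  let ?e = "extreme_point d \<gamma> p \<pi> (\<pi> \<circ> Transposition.transpose i2 i3 \<circ> Transposition.transpose i1 i3)"
  have sg: "C.\<sigma> = \<pi> \<circ> Transposition.transpose i2 i3 \<circ> Transposition.transpose i1 i3" by (rule C.\<sigma>_def)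
  note ev = C.ext_vals[unfolded sg]
  define f where "f a = \<bar>marginal N out a - ?e a\<bar>" for a
  let ?B = "BN (p i1 / \<gamma> i1 + p i2 / \<gamma> i2 + p i3 / \<gamma> i3) N"
  have f3: "f i3 \<le> ?B" unfolding f_def mo[OF ins(3)] ev(1) using fb1 L1 by simp
  have f1: "f i1 \<le> 2 * ?B" unfolding f_def mo[OF ins(1)] ev(2) using fb1 fb2 L1 L2 by linarith
  have f2: "f i2 \<le> ?B" unfolding f_def mo[OF ins(2)] ev(3) using fb2 fb3 L2 by linarith
  have f0: "f a = 0" if "a \<in> {1..d} - {i1, i2, i3}" for a
    unfolding f_def using that mo other ev(4) by auto
  have "(\<Sum>a=1..d. f a) = (\<Sum>a\<in>{i1, i2, i3}. f a)"
    by (rule sum.mono_neutral_right) (use ins f0 in auto)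
  also have "\<dots> = f i1 + f i2 + f i3" using dst by simp
  finally have "(\<Sum>a=1..d. f a) \<le> 4 * ?B" using f1 f2 f3 by linarith
  hence "tvd d (marginal N out) ?e \<le> 2 * ?B" unfolding tvd_def f_def by simp
  thus "tvd d (marginal N (mem_therm d N (swap_protocol (joint_gibbs d \<beta> E N) N i1 i3 (swap_protocol (joint_gibbs d \<beta> E N) N i2 i3 (tensor_eta d N p)))))
           (extreme_point d (gibbs d \<beta> E) p \<pi> (\<pi> \<circ> Transposition.transpose i2 i3 \<circ> Transposition.transpose i1 i3))
         \<le> 2 * BN (p i1 / gibbs d \<beta> E i1 + p i2 / gibbs d \<beta> E i2 + p i3 / gibbs d \<beta> E i3) N"
    unfolding G_def[symmetric] Q0_def[symmetric] Peq out_def[symmetric] \<gamma>_def[symmetric] .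
qed


theorem theorem3:
  fixes d :: nat and \<beta> :: real and E p :: "nat \<Rightarrow> real" and \<pi> :: "nat \<Rightarrow> nat"
    and i1 i2 i3 :: nat
  assumes "d \<ge> 3" and "\<beta> > 0"
    and "prob_vec d p"
    and "beta_order d (gibbs d \<beta> E) p \<pi>"
    and "i1 \<in> {1..d}" "i2 \<in> {1..d}" "i3 \<in> {1..d}"
    and "i1 \<noteq> i2" "i2 \<noteq> i3" "i1 \<noteq> i3"
    and "\<pi> i3 = \<pi> i2 + 1" "\<pi> i2 = \<pi> i1 + 1"
  shows "(\<forall>N\<ge>1.
            (let G = joint_gibbs d \<beta> E N;
                 out = mem_therm d N (swap_protocol G N i1 i3
                         (swap_protocol G N i2 i3 (tensor_eta d N p)))
             in out = tensor_eta d N (marginal N out)))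
       \<and> (\<lambda>N. let G = joint_gibbs d \<beta> E N;
                   out = mem_therm d N (swap_protocol G N i1 i3
                           (swap_protocol G N i2 i3 (tensor_eta d N p)))
               in tvd d (marginal N out)
                    (extreme_point d (gibbs d \<beta> E) p \<pi>
                       (\<pi> \<circ> Transposition.transpose i2 i3 \<circ> Transposition.transpose i1 i3)))
         \<longlonglongrightarrow> 0"
proof -
  note mN = main_N[OF assms(1) assms(3) assms(4) assms(5) assms(6) assms(7) assms(8) assms(9) assms(10) assms(11) assms(12)]
  let ?R = "p i1 / gibbs d \<beta> E i1 + p i2 / gibbs d \<beta> E i2 + p i3 / gibbs d \<beta> E i3"
  have A: "\<forall>N\<ge>1.
            (let G = joint_gibbs d \<beta> E N;
                 out = mem_therm d N (swap_protocol G N i1 i3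
                         (swap_protocol G N i2 i3 (tensor_eta d N p)))
             in out = tensor_eta d N (marginal N out))"
    using mN(1) by (simp add: Let_def)
  have B: "(\<lambda>N. let G = joint_gibbs d \<beta> E N;
                   out = mem_therm d N (swap_protocol G N i1 i3
                           (swap_protocol G N i2 i3 (tensor_eta d N p)))
               in tvd d (marginal N out)
                    (extreme_point d (gibbs d \<beta> E) p \<pi>
                       (\<pi> \<circ> Transposition.transpose i2 i3 \<circ> Transposition.transpose i1 i3)))
         \<longlonglongrightarrow> 0"
    unfolding Let_def
  proof (rule tendsto_sandwich[where f="\<lambda>N. 0" and h="\<lambda>N. 2 * BN ?R N"])
    show "\<forall>\<^sub>F N in sequentially. 0 \<le> tvd d (marginal N (mem_therm d N (swap_protocol (joint_gibbs d \<beta> E N) N i1 i3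
                           (swap_protocol (joint_gibbs d \<beta> E N) N i2 i3 (tensor_eta d N p)))))
                    (extreme_point d (gibbs d \<beta> E) p \<pi>
                       (\<pi> \<circ> Transposition.transpose i2 i3 \<circ> Transposition.transpose i1 i3))"
      unfolding tvd_def by (intro always_eventually allI divide_nonneg_pos sum_nonneg) auto
    show "\<forall>\<^sub>F N in sequentially. tvd d (marginal N (mem_therm d N (swap_protocol (joint_gibbs d \<beta> E N) N i1 i3
                           (swap_protocol (joint_gibbs d \<beta> E N) N i2 i3 (tensor_eta d N p)))))
                    (extreme_point d (gibbs d \<beta> E) p \<pi>
                       (\<pi> \<circ> Transposition.transpose i2 i3 \<circ> Transposition.transpose i1 i3)) \<le> 2 * BN ?R N"
      using eventually_ge_at_top[of "1::nat"] by eventually_elim (rule mN(2))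
    show "(\<lambda>N. 0) \<longlonglongrightarrow> (0::real)" by simp
    have "(\<lambda>N. 2 * BN ?R N) \<longlonglongrightarrow> 2 * 0" by (intro tendsto_intros BN_lim)
    thus "(\<lambda>N. 2 * BN ?R N) \<longlonglongrightarrow> 0" by simp
  qed
  show ?thesis using A B by blast
qed

end
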